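(* Let $\mathcal A_1,\mathcal B_1:U_1\to V_1$ be linear maps of finite-dimensional vector spaces over a field $\mathbb F$. Let $U_2=\mathcal A_1^{-1}(\operatorname{im}\mathcal B_1)$, $V_2=\operatorname{im}\mathcal B_1$, and let $\mathcal A_2,\mathcal B_2:U_2\to V_2$ be the restrictions of $\mathcal A_1,\mathcal B_1$. Similarly let $U_3=\mathcal A_2^{-1}(\operatorname{im}\mathcal B_2)$, $V_3=\operatorname{im}\mathcal B_2$. Let $(A_1,B_1)$ and $(A_2,B_2)$ be the matrix pairs of $(\mathcal A_1,\mathcal B_1)$ and $(\mathcal A_2,\mathcal B_2)$ in arbitrary bases, and take any regularizing decomposition of $(A_1,B_1)$. Then a regularizing decomposition of $(A_2,B_2)$ is obtained from it by: deleting all summands $(L_1^T,R_1^T)=(0_{10},0_{10})$ and all summands $(I_1,J_1(0))=([1],[0])$; replacing each summand $(L_k^T,R_k^T)$ with $k\ge2$ by $(L_{k-1}^T,R_{k-1}^T)$ and each summand $(I_k,J_k(0))$ with $k\ge2$ by $(I_{k-1},J_{k-1}(0))$; and leaving all other summands (the regular part $(I_r,D)$ and the summands $(J_k(0),I_k)$, $(L_k,R_k)$) unchanged. Moreover, the number of summands $(L_1^T,R_1^T)$ in the decomposition of $(A_1,B_1)$ equals $(\dim V_1-\dim V_2)-(\dim U_1-\dim U_2)$, and the number of summands $(I_1,J_1(0))$ equals $(\dim U_1-\dim U_2)-(\dim V_2-\dim V_3)$.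
   Context: $J_k(0)$ denotes the $k\times k$ nilpotent Jordan block with ones directly below the diagonal. $L_k$ and $R_k$ are the $(k-1)\times k$ matrices obtained from $I_k$ by deleting its last row, respectively its first row ($L_1=R_1$ is the $0\times1$ matrix, $L_1^T=R_1^T=0_{10}$ the $1\times 0$ matrix). Direct sums of matrix pairs are blockwise. Two matrix pairs $(A,B)$, $(A',B')$ are equivalent if $SA=A'R$, $SB=B'R$ for nonsingular $S,R$. A regularizing decomposition of a matrix pair $(A,B)$ is a direct sum $(I_r,D)\oplus(M_1,N_1)\oplus\dots\oplus(M_t,N_t)$ equivalent to $(A,B)$, in which $D$ is $r\times r$ nonsingular and each $(M_i,N_i)$ is one of $(I_k,J_k(0))$, $(J_k(0),I_k)$, $(L_k,R_k)$, $(L_k^T,R_k^T)$, $k\ge1$. *)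

theory Defs
  imports "Jordan_Normal_Form.Matrix"
begin

definition jordan0 :: "nat \<Rightarrow> 'a::field mat" where
  "jordan0 k = mat k k (\<lambda>(i,j). if i = j + 1 then 1 else 0)"

text \<open>L_k: I_k with last row deleted; R_k: I_k with first row deleted ((k-1) x k).\<close>
definition Lmat :: "nat \<Rightarrow> 'a::field mat" where
  "Lmat k = mat (k - 1) k (\<lambda>(i,j). if j = i then 1 else 0)"

definition Rmat :: "nat \<Rightarrow> 'a::field mat" where
  "Rmat k = mat (k - 1) k (\<lambda>(i,j). if j = i + 1 then 1 else 0)"

datatype summand =
    IJ nat
  | JI nat
  | LR nat
  | LRT nat

fun summand_index :: "summand \<Rightarrow> nat" where
  "summand_index (IJ k) = k"
| "summand_index (JI k) = k"
| "summand_index (LR k) = k"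
| "summand_index (LRT k) = k"

fun summand_pair :: "summand \<Rightarrow> 'a::field mat \<times> 'a mat" where
  "summand_pair (IJ k) = (1\<^sub>m k, jordan0 k)"
| "summand_pair (JI k) = (jordan0 k, 1\<^sub>m k)"
| "summand_pair (LR k) = (Lmat k, Rmat k)"
| "summand_pair (LRT k) = (transpose_mat (Lmat k), transpose_mat (Rmat k))"

definition dsum_mat :: "'a::field mat \<Rightarrow> 'a mat \<Rightarrow> 'a mat" where
  "dsum_mat A B = four_block_mat A (0\<^sub>m (dim_row A) (dim_col B)) (0\<^sub>m (dim_row B) (dim_col A)) B"

definition dsum_pair :: "'a::field mat \<times> 'a mat \<Rightarrow> 'a mat \<times> 'a mat \<Rightarrow> 'a mat \<times> 'a mat" where
  "dsum_pair P Q = (dsum_mat (fst P) (fst Q), dsum_mat (snd P) (snd Q))"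

definition decomp_pair :: "nat \<Rightarrow> 'a::field mat \<Rightarrow> summand list \<Rightarrow> 'a mat \<times> 'a mat" where
  "decomp_pair r D bs = foldl (\<lambda>P b. dsum_pair P (summand_pair b)) (1\<^sub>m r, D) bs"

definition pair_equiv :: "'a::field mat \<times> 'a mat \<Rightarrow> 'a mat \<times> 'a mat \<Rightarrow> bool" where
  "pair_equiv P P' \<longleftrightarrow>
     (let m = dim_row (fst P); n = dim_col (fst P) in
       snd P \<in> carrier_mat m n \<and> fst P' \<in> carrier_mat m n \<and> snd P' \<in> carrier_mat m n \<and>
       (\<exists>S R. S \<in> carrier_mat m m \<and> R \<in> carrier_mat n n \<and>
              invertible_mat S \<and> invertible_mat R \<and>
              S * fst P = fst P' * R \<and> S * snd P = snd P' * R))"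

definition regularizing_decomp :: "'a::field mat \<times> 'a mat \<Rightarrow> nat \<Rightarrow> 'a mat \<Rightarrow> summand list \<Rightarrow> bool" where
  "regularizing_decomp P r D bs \<longleftrightarrow>
     D \<in> carrier_mat r r \<and> invertible_mat D \<and>
     (\<forall>b \<in> set bs. summand_index b \<ge> 1) \<and>
     pair_equiv P (decomp_pair r D bs)"

fun reduce_summand :: "summand \<Rightarrow> summand list" where
  "reduce_summand (LRT k) = (if k \<le> 1 then [] else [LRT (k - 1)])"
| "reduce_summand (IJ k) = (if k \<le> 1 then [] else [IJ (k - 1)])"
| "reduce_summand b = [b]"

definition reduce_summands :: "summand list \<Rightarrow> summand list" where
  "reduce_summands bs = concat (map reduce_summand bs)"

definition basis_matrix :: "nat \<Rightarrow> 'a::field vec set \<Rightarrow> 'a mat \<Rightarrow> bool" where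
  "basis_matrix n W M \<longleftrightarrow> M \<in> carrier_mat n (dim_col M) \<and>
     (\<forall>x \<in> carrier_vec (dim_col M). M *\<^sub>v x = 0\<^sub>v n \<longrightarrow> x = 0\<^sub>v (dim_col M)) \<and>
     (\<lambda>x. M *\<^sub>v x) ` carrier_vec (dim_col M) = W"

end

theory Submission
  imports Defs "Jordan_Normal_Form.Determinant"
begin


lemma bm_carrier: "basis_matrix n W (M::'a::field mat) \<Longrightarrow> M \<in> carrier_mat n (dim_col M)"
  unfolding basis_matrix_def by auto

lemma bm_inj: fixes M :: "'a::field mat" assumes "basis_matrix n W M" "x \<in> carrier_vec (dim_col M)" "y \<in> carrier_vec (dim_col M)"
  "M *\<^sub>v x = M *\<^sub>v y" shows "x = y"
proof -
  have M: "M \<in> carrier_mat n (dim_col M)" using assms(1) by (rule bm_carrier)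
  have "M *\<^sub>v (x - y) = M *\<^sub>v x - M *\<^sub>v y" using M assms(2,3) by (rule mult_minus_distrib_mat_vec)
  also have "\<dots> = 0\<^sub>v n" unfolding assms(4) by (rule minus_cancel_vec, rule mult_mat_vec_carrier[OF M assms(3)])
  finally have e: "M *\<^sub>v (x - y) = 0\<^sub>v n" .
  have inj: "\<forall>x \<in> carrier_vec (dim_col M). M *\<^sub>v x = 0\<^sub>v n \<longrightarrow> x = 0\<^sub>v (dim_col M)"
    using assms(1) unfolding basis_matrix_def by blast
  have "x - y \<in> carrier_vec (dim_col M)" using assms(2,3) by (rule minus_carrier_vec)
  hence d: "x - y = 0\<^sub>v (dim_col M)" using inj e by blast
  show ?thesis
  proof (rule eq_vecI)
    fix i assume i: "i < dim_vec y"
    have "(x - y) $ i = 0" unfolding d using i assms(3) by simp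
    thus "x $ i = y $ i" using i assms(2,3) by simp
  qed (insert assms(2,3), simp)
qed

lemma col_as_mult: fixes N :: "'a::field mat" assumes "N \<in> carrier_mat n k" "j < k" shows "col N j = N *\<^sub>v unit_vec k j"
proof -
  have "col (N * 1\<^sub>m k) j = N *\<^sub>v col (1\<^sub>m k) j" by (rule col_mult2[OF assms(1) one_carrier_mat assms(2)])
  moreover have "N * 1\<^sub>m k = N" using assms(1) by (rule right_mult_one_mat)
  moreover have "col (1\<^sub>m k) j = unit_vec k j" using assms(2) by simp
  ultimately show ?thesis by metis
qed

lemma bm_cancel: fixes M :: "'a::field mat" assumes "basis_matrix n W M" "X \<in> carrier_mat (dim_col M) k" "Y \<in> carrier_mat (dim_col M) k"
  "M * X = M * Y" shows "X = Y"
proof (rule mat_col_eqI)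
  fix i assume i: "i < dim_col Y"
  have i': "i < k" using assms(3) i by simp
  have M: "M \<in> carrier_mat n (dim_col M)" using assms(1) unfolding basis_matrix_def by blast
  have c: "col (M * X) i = col (M * Y) i" using assms(4) by (rule arg_cong)
  have c1: "col (M * X) i = M *\<^sub>v col X i" using M assms(2) i' by (rule col_mult2)
  have c2: "col (M * Y) i = M *\<^sub>v col Y i" using M assms(3) i' by (rule col_mult2)
  have c3: "col X i \<in> carrier_vec (dim_col M)" "col Y i \<in> carrier_vec (dim_col M)"
    using assms(2,3) i' by auto
  show "col X i = col Y i" by (rule bm_inj[OF assms(1) c3]) (use c c1 c2 in simp)
next
  show "dim_row X = dim_row Y" "dim_col X = dim_col Y" using assms(2,3) by auto
qed

lemma bm_image: "basis_matrix n W (M::'a::field mat) \<Longrightarrow> x \<in> carrier_vec (dim_col M) \<Longrightarrow> M *\<^sub>v x \<in> W"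
  unfolding basis_matrix_def by blast

lemma bm_preimage: "basis_matrix n W (M::'a::field mat) \<Longrightarrow> w \<in> W \<Longrightarrow> \<exists>x \<in> carrier_vec (dim_col M). M *\<^sub>v x = w"
  unfolding basis_matrix_def by blast

lemma bm_col: fixes M :: "'a::field mat" assumes "basis_matrix n W M" "j < dim_col M" shows "col M j \<in> W"
proof -
  have M: "M \<in> carrier_mat n (dim_col M)" using assms(1) by (rule bm_carrier)
  have "col M j = M *\<^sub>v unit_vec (dim_col M) j" using M assms(2) by (rule col_as_mult)
  thus ?thesis using bm_image[OF assms(1), of "unit_vec (dim_col M) j"] by simp
qed

lemma bm_factor: fixes M :: "'a::field mat" assumes "basis_matrix n W M" "N \<in> carrier_mat n k" "\<And>j. j < k \<Longrightarrow> col N j \<in> W"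
  shows "\<exists>X \<in> carrier_mat (dim_col M) k. N = M * X"
proof -
  have M: "M \<in> carrier_mat n (dim_col M)" using assms(1) by (rule bm_carrier)
  define xs where "xs = (\<lambda>j. SOME x. x \<in> carrier_vec (dim_col M) \<and> M *\<^sub>v x = col N j)"
  have xs: "xs j \<in> carrier_vec (dim_col M) \<and> M *\<^sub>v xs j = col N j" if "j < k" for j
    unfolding xs_def using bm_preimage[OF assms(1) assms(3)[OF that]] by (rule someI2_bex) auto
  define X where "X = mat_of_cols (dim_col M) (map xs [0..<k])"
  have X: "X \<in> carrier_mat (dim_col M) k" unfolding X_def using mat_of_cols_carrier(1)[of "dim_col M" "map xs [0..<k]"] by simp
  have "N = M * X"
  proof (rule mat_col_eqI)
    fix j assume "j < dim_col (M * X)"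
    hence j: "j < k" using X by simp
    have cX: "col X j = xs j" unfolding X_def using j xs[OF j] by (subst col_mat_of_cols) auto
    have "col (M * X) j = M *\<^sub>v col X j" using M X j by (rule col_mult2)
    thus "col N j = col (M * X) j" using cX xs[OF j] by simp
  next
    show "dim_row N = dim_row (M * X)" using M assms(2) by simp
  next
    show "dim_col N = dim_col (M * X)" using X assms(2) by simp
  qed
  thus ?thesis using X by blast
qed

lemma square_of_inverses: fixes X :: "'a::field mat"
  assumes X: "X \<in> carrier_mat d e" and Y: "Y \<in> carrier_mat e d" and YX: "Y * X = 1\<^sub>m e"
  shows "e \<le> d"
proof (rule ccontr)
  assume "\<not> e \<le> d"
  hence lt: "d < e" by simp
  define X' where "X' = four_block_mat X (0\<^sub>m d 0) (0\<^sub>m (e - d) e) (0\<^sub>m (e - d) 0)"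
  define Y' where "Y' = four_block_mat Y (0\<^sub>m e (e - d)) (0\<^sub>m 0 d) (0\<^sub>m 0 (e - d))"
  have X': "X' \<in> carrier_mat e e" unfolding X'_def using X lt
    four_block_carrier_mat[OF X zero_carrier_mat[of "e - d" 0], of "0\<^sub>m d 0" "0\<^sub>m (e - d) e"] by simp
  have Y': "Y' \<in> carrier_mat e e" unfolding Y'_def using Y lt
    four_block_carrier_mat[OF Y zero_carrier_mat[of 0 "e - d"], of "0\<^sub>m e (e - d)" "0\<^sub>m 0 d"] by simp
  have "Y' * X' = four_block_mat (Y * X + 0\<^sub>m e (e - d) * 0\<^sub>m (e - d) e) (Y * 0\<^sub>m d 0 + 0\<^sub>m e (e - d) * 0\<^sub>m (e - d) 0)
    (0\<^sub>m 0 d * X + 0\<^sub>m 0 (e - d) * 0\<^sub>m (e - d) e) (0\<^sub>m 0 d * 0\<^sub>m d 0 + 0\<^sub>m 0 (e - d) * 0\<^sub>m (e - d) 0)"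
    unfolding X'_def Y'_def by (rule mult_four_block_mat) (use X Y in auto)
  also have "\<dots> = 1\<^sub>m e"
    by (rule eq_matI) (use X Y YX lt in auto)
  finally have "Y' * X' = 1\<^sub>m e" .
  hence XY': "X' * Y' = 1\<^sub>m e" using X' Y' by (metis mat_mult_left_right_inverse)
  have "(X' * Y') $$ (e - 1, e - 1) = row X' (e - 1) \<bullet> col Y' (e - 1)"
    using X' Y' lt by (intro index_mult_mat(1)) auto
  also have "row X' (e - 1) = 0\<^sub>v e" unfolding X'_def using X lt by (intro eq_vecI) auto
  also have "0\<^sub>v e \<bullet> col Y' (e - 1) = 0" using Y' by (intro scalar_prod_left_zero) auto
  finally show False using XY' lt by simp
qed


lemma inv_obtain: fixes S :: "'a::field mat" assumes "invertible_mat S" "S \<in> carrier_mat n n"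
  shows "\<exists>Si \<in> carrier_mat n n. S * Si = 1\<^sub>m n \<and> Si * S = 1\<^sub>m n"
proof -
  obtain B where B: "S * B = 1\<^sub>m (dim_row S)" "B * S = 1\<^sub>m (dim_row B)"
    using assms(1) unfolding invertible_mat_def inverts_mat_def by blast
  have r: "dim_row S = n" "dim_col S = n" using assms(2) by auto
  have "dim_col (S * B) = n" using B(1) r by simp
  hence c: "dim_col B = n" by simp
  have "dim_row (B * S) = dim_col (B * S)" using B(2) by simp
  hence rB: "dim_row B = n" using r by simp
  have Bc: "B \<in> carrier_mat n n" using c rB by (intro carrier_matI) auto
  moreover have "S * B = 1\<^sub>m n" using B(1) r by simp
  moreover have "B * S = 1\<^sub>m n" using B(2) rB by simp
  ultimately show ?thesis by blast
qed

lemma invI: fixes S :: "'a::field mat" assumes "S \<in> carrier_mat n n" "Si \<in> carrier_mat n n"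
  "S * Si = 1\<^sub>m n" "Si * S = 1\<^sub>m n" shows "invertible_mat S" "invertible_mat Si"
  using assms unfolding invertible_mat_def inverts_mat_def square_mat.simps carrier_mat_def by auto

lemma bm_change: fixes M N :: "'a::field mat" assumes M: "basis_matrix n W M" and N: "basis_matrix n W N"
  shows "\<exists>X. X \<in> carrier_mat (dim_col M) (dim_col N) \<and> invertible_mat X \<and> N = M * X"
proof -
  have Mc: "M \<in> carrier_mat n (dim_col M)" using M by (rule bm_carrier)
  have Nc: "N \<in> carrier_mat n (dim_col N)" using N by (rule bm_carrier)
  obtain X where X: "X \<in> carrier_mat (dim_col M) (dim_col N)" "N = M * X"
    using bm_factor[OF M Nc bm_col[OF N]] by blast
  obtain Y where Y: "Y \<in> carrier_mat (dim_col N) (dim_col M)" "M = N * Y"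
    using bm_factor[OF N Mc bm_col[OF M]] by blast
  have "M * (X * Y) = (M * X) * Y" using assoc_mult_mat[OF Mc X(1) Y(1)] by simp
  also have "\<dots> = M" by (simp only: X(2)[symmetric] Y(2)[symmetric])
  also have "\<dots> = M * 1\<^sub>m (dim_col M)" using right_mult_one_mat[OF Mc] by simp
  finally have XY: "X * Y = 1\<^sub>m (dim_col M)"
    using bm_cancel[OF M mult_carrier_mat[OF X(1) Y(1)] one_carrier_mat] by blast
  have "N * (Y * X) = (N * Y) * X" using assoc_mult_mat[OF Nc Y(1) X(1)] by simp
  also have "\<dots> = N" by (simp only: X(2)[symmetric] Y(2)[symmetric])
  also have "\<dots> = N * 1\<^sub>m (dim_col N)" using right_mult_one_mat[OF Nc] by simp
  finally have YX: "Y * X = 1\<^sub>m (dim_col N)"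
    using bm_cancel[OF N mult_carrier_mat[OF Y(1) X(1)] one_carrier_mat] by blast
  have "dim_col N \<le> dim_col M" using square_of_inverses[OF X(1) Y(1) YX] .
  moreover have "dim_col M \<le> dim_col N" using square_of_inverses[OF Y(1) X(1) XY] .
  ultimately have eq: "dim_col M = dim_col N" by simp
  have Xc: "X \<in> carrier_mat (dim_col M) (dim_col M)" using X(1) eq by simp
  have Yc: "Y \<in> carrier_mat (dim_col M) (dim_col M)" using Y(1) eq by simp
  have YX': "Y * X = 1\<^sub>m (dim_col M)" using YX eq by simp
  have "invertible_mat X" by (rule invI(1)[OF Xc Yc XY YX'])
  thus ?thesis using X by blast
qed

lemma pair_equiv_from: fixes A2 B2 A2' B2' X Y :: "'a::field mat"
  assumes A2: "A2 \<in> carrier_mat e d" "B2 \<in> carrier_mat e d" "A2' \<in> carrier_mat e d" "B2' \<in> carrier_mat e d"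
  and X: "X \<in> carrier_mat d d" "invertible_mat X" and Y: "Y \<in> carrier_mat e e" "invertible_mat Y"
  and eA: "A2 * X = Y * A2'" and eB: "B2 * X = Y * B2'"
  shows "pair_equiv (A2, B2) (A2', B2')"
proof -
  obtain Xi where Xi: "Xi \<in> carrier_mat d d" "X * Xi = 1\<^sub>m d" "Xi * X = 1\<^sub>m d" using inv_obtain[OF X(2) X(1)] by blast
  obtain Yi where Yi: "Yi \<in> carrier_mat e e" "Y * Yi = 1\<^sub>m e" "Yi * Y = 1\<^sub>m e" using inv_obtain[OF Y(2) Y(1)] by blast
  have gen: "Yi * C = C' * Xi" if C: "C \<in> carrier_mat e d" "C' \<in> carrier_mat e d" and eC: "C * X = Y * C'" for C C'
  proof -
    have "Yi * C = Yi * (C * (X * Xi))" using right_mult_one_mat[OF C(1)] Xi(2) by simp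
    also have "\<dots> = Yi * ((C * X) * Xi)" using assoc_mult_mat[OF C(1) X(1) Xi(1)] by simp
    also have "\<dots> = Yi * ((Y * C') * Xi)" using eC by simp
    also have "\<dots> = Yi * (Y * (C' * Xi))" using assoc_mult_mat[OF Y(1) C(2) Xi(1)] by simp
    also have "\<dots> = (Yi * Y) * (C' * Xi)" using assoc_mult_mat[OF Yi(1) Y(1) mult_carrier_mat[OF C(2) Xi(1)]] by simp
    also have "\<dots> = C' * Xi" using Yi(3) left_mult_one_mat[OF mult_carrier_mat[OF C(2) Xi(1)]] by simp
    finally show ?thesis .
  qed
  have "invertible_mat Yi" "invertible_mat Xi" using invI(2) Yi Y Xi X by blast+
  thus ?thesis unfolding pair_equiv_def Let_def using A2 Xi Yi gen[OF A2(1,3) eA] gen[OF A2(2,4) eB] by auto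
qed


lemma mv_zero: "(T::'a::field mat) \<in> carrier_mat k k' \<Longrightarrow> T *\<^sub>v 0\<^sub>v k' = 0\<^sub>v k"
  by (intro eq_vecI) auto

lemma mv_zero2: "(x::'a::field vec) \<in> carrier_vec c \<Longrightarrow> 0\<^sub>m r c *\<^sub>v x = 0\<^sub>v r"
  by (intro eq_vecI) auto

lemma vec_cancel: fixes T :: "'a::field mat"
  assumes "T \<in> carrier_mat k k" "Ti \<in> carrier_mat k k" "Ti * T = 1\<^sub>m k"
    "x \<in> carrier_vec k" "y \<in> carrier_vec k" "T *\<^sub>v x = T *\<^sub>v y" shows "x = y"
proof -
  have "x = (Ti * T) *\<^sub>v x" using assms by simp
  also have "\<dots> = Ti *\<^sub>v (T *\<^sub>v x)" using assms by (intro assoc_mult_mat_vec) auto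
  also have "\<dots> = Ti *\<^sub>v (T *\<^sub>v y)" using assms by simp
  also have "\<dots> = (Ti * T) *\<^sub>v y" using assms by (intro assoc_mult_mat_vec[symmetric]) auto
  also have "\<dots> = y" using assms by simp
  finally show ?thesis .
qed

lemma vec_inv: fixes T :: "'a::field mat"
  assumes "T \<in> carrier_mat k k" "Ti \<in> carrier_mat k k" "T * Ti = 1\<^sub>m k" "x \<in> carrier_vec k"
  shows "T *\<^sub>v (Ti *\<^sub>v x) = x"
proof -
  have "T *\<^sub>v (Ti *\<^sub>v x) = (T * Ti) *\<^sub>v x" using assms by (intro assoc_mult_mat_vec[symmetric]) auto
  also have "\<dots> = x" using assms by simp
  finally show ?thesis .
qed

lemma bm_transform: fixes M T :: "'a::field mat"
  assumes M: "basis_matrix k W M" and T: "T \<in> carrier_mat k k" "Ti \<in> carrier_mat k k" "Ti * T = 1\<^sub>m k"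
  and W': "W' = (\<lambda>w. T *\<^sub>v w) ` W"
  shows "basis_matrix k W' (T * M)"
proof -
  have Mc: "M \<in> carrier_mat k (dim_col M)" using M by (rule bm_carrier)
  have TM: "T * M \<in> carrier_mat k (dim_col M)" using mult_carrier_mat[OF T(1) Mc] .
  have dc: "dim_col (T * M) = dim_col M" by simp
  have mv: "(T * M) *\<^sub>v x = T *\<^sub>v (M *\<^sub>v x)" if "x \<in> carrier_vec (dim_col M)" for x
    using assoc_mult_mat_vec[OF T(1) Mc that] .
  have inj: "x = 0\<^sub>v (dim_col M)" if x: "x \<in> carrier_vec (dim_col M)" "(T * M) *\<^sub>v x = 0\<^sub>v k" for x
  proof -
    have "T *\<^sub>v (M *\<^sub>v x) = T *\<^sub>v 0\<^sub>v k" using x(2) mv[OF x(1)] mv_zero[OF T(1)] by simp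
    moreover have "M *\<^sub>v x \<in> carrier_vec k" using mult_mat_vec_carrier[OF Mc x(1)] .
    ultimately have "M *\<^sub>v x = 0\<^sub>v k" using vec_cancel[OF T, of "M *\<^sub>v x" "0\<^sub>v k"] zero_carrier_vec by blast
    moreover have "M *\<^sub>v 0\<^sub>v (dim_col M) = 0\<^sub>v k" using mv_zero[OF Mc] .
    ultimately show ?thesis using bm_inj[OF M x(1), of "0\<^sub>v (dim_col M)"] by simp
  qed
  have img: "(\<lambda>x. (T * M) *\<^sub>v x) ` carrier_vec (dim_col M) = W'"
  proof -
    have "W = (\<lambda>x. M *\<^sub>v x) ` carrier_vec (dim_col M)" using M unfolding basis_matrix_def by blast
    hence "W' = (\<lambda>x. T *\<^sub>v (M *\<^sub>v x)) ` carrier_vec (dim_col M)" using W' by auto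
    also have "\<dots> = (\<lambda>x. (T * M) *\<^sub>v x) ` carrier_vec (dim_col M)" using mv by (intro image_cong) auto
    finally show ?thesis by simp
  qed
  show ?thesis unfolding basis_matrix_def dc using TM inj img by auto
qed


definition V2s :: "'a::field mat \<Rightarrow> 'a vec set" where
  "V2s B = (\<lambda>u. B *\<^sub>v u) ` carrier_vec (dim_col B)"
definition U2s :: "'a::field mat \<Rightarrow> 'a mat \<Rightarrow> 'a vec set" where
  "U2s A B = {u \<in> carrier_vec (dim_col B). A *\<^sub>v u \<in> V2s B}"
definition V3s :: "'a::field mat \<Rightarrow> 'a mat \<Rightarrow> 'a vec set" where
  "V3s A B = (\<lambda>u. B *\<^sub>v u) ` U2s A B"

lemma equiv_reduce:
  fixes A B A' B' S R P Q Q3 P' Q' Q3' A2 B2 A2' B2' :: "'a::field mat"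
  assumes carr: "A \<in> carrier_mat m n" "B \<in> carrier_mat m n" "A' \<in> carrier_mat m n" "B' \<in> carrier_mat m n"
  and S: "S \<in> carrier_mat m m" "invertible_mat S" and R: "R \<in> carrier_mat n n" "invertible_mat R"
  and eqA: "S * A = A' * R" and eqB: "S * B = B' * R"
  and P: "basis_matrix n (U2s A B) P" and Q: "basis_matrix m (V2s B) Q" and Q3: "basis_matrix m (V3s A B) Q3"
  and P': "basis_matrix n (U2s A' B') P'" and Q': "basis_matrix m (V2s B') Q'" and Q3': "basis_matrix m (V3s A' B') Q3'"
  and A2: "A2 \<in> carrier_mat (dim_col Q) (dim_col P)" "B2 \<in> carrier_mat (dim_col Q) (dim_col P)"
     "A * P = Q * A2" "B * P = Q * B2"
  and A2': "A2' \<in> carrier_mat (dim_col Q') (dim_col P')" "B2' \<in> carrier_mat (dim_col Q') (dim_col P')"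
     "A' * P' = Q' * A2'" "B' * P' = Q' * B2'"
  shows "dim_col P' = dim_col P \<and> dim_col Q' = dim_col Q \<and> dim_col Q3' = dim_col Q3 \<and> pair_equiv (A2, B2) (A2', B2')"
proof -
  obtain Si where Si: "Si \<in> carrier_mat m m" "S * Si = 1\<^sub>m m" "Si * S = 1\<^sub>m m" using inv_obtain[OF S(2) S(1)] by blast
  obtain Ri where Ri: "Ri \<in> carrier_mat n n" "R * Ri = 1\<^sub>m n" "Ri * R = 1\<^sub>m n" using inv_obtain[OF R(2) R(1)] by blast
  have dB: "dim_col B = n" "dim_col B' = n" using carr by auto
  have kA: "A' *\<^sub>v (R *\<^sub>v w) = S *\<^sub>v (A *\<^sub>v w)" if "w \<in> carrier_vec n" for w
  proof -
    have "A' *\<^sub>v (R *\<^sub>v w) = (A' * R) *\<^sub>v w" using carr R that by (intro assoc_mult_mat_vec[symmetric]) auto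
    also have "\<dots> = (S * A) *\<^sub>v w" using eqA by simp
    also have "\<dots> = S *\<^sub>v (A *\<^sub>v w)" using carr S that by (intro assoc_mult_mat_vec) auto
    finally show ?thesis .
  qed
  have kB: "B' *\<^sub>v (R *\<^sub>v w) = S *\<^sub>v (B *\<^sub>v w)" if "w \<in> carrier_vec n" for w
  proof -
    have "B' *\<^sub>v (R *\<^sub>v w) = (B' * R) *\<^sub>v w" using carr R that by (intro assoc_mult_mat_vec[symmetric]) auto
    also have "\<dots> = (S * B) *\<^sub>v w" using eqB by simp
    also have "\<dots> = S *\<^sub>v (B *\<^sub>v w)" using carr S that by (intro assoc_mult_mat_vec) auto
    finally show ?thesis .
  qed
  have Rinv: "R *\<^sub>v (Ri *\<^sub>v u) = u" if "u \<in> carrier_vec n" for u using vec_inv[OF R(1) Ri(1,2) that] .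
  have Ric: "Ri *\<^sub>v u \<in> carrier_vec n" if "u \<in> carrier_vec n" for u using Ri(1) that by simp
  have Rc: "R *\<^sub>v u \<in> carrier_vec n" if "u \<in> carrier_vec n" for u using R(1) that by simp
  have Scan: "x = y" if "x \<in> carrier_vec m" "y \<in> carrier_vec m" "S *\<^sub>v x = S *\<^sub>v y" for x y
    using vec_cancel[OF S(1) Si(1,3) that] .
  have Av: "A *\<^sub>v w \<in> carrier_vec m" "B *\<^sub>v w \<in> carrier_vec m" if "w \<in> carrier_vec n" for w
    using carr that by auto
  have V: "V2s B' = (\<lambda>w. S *\<^sub>v w) ` V2s B"
  proof
    show "V2s B' \<subseteq> (\<lambda>w. S *\<^sub>v w) ` V2s B"
    proof
      fix v assume "v \<in> V2s B'"
      then obtain u where u: "u \<in> carrier_vec n" "v = B' *\<^sub>v u" unfolding V2s_def dB by blast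
      have "v = S *\<^sub>v (B *\<^sub>v (Ri *\<^sub>v u))" using u kB[OF Ric[OF u(1)]] Rinv[OF u(1)] by simp
      moreover have "B *\<^sub>v (Ri *\<^sub>v u) \<in> V2s B" unfolding V2s_def dB using Ric[OF u(1)] by blast
      ultimately show "v \<in> (\<lambda>w. S *\<^sub>v w) ` V2s B" by blast
    qed
    show "(\<lambda>w. S *\<^sub>v w) ` V2s B \<subseteq> V2s B'"
    proof
      fix v assume "v \<in> (\<lambda>w. S *\<^sub>v w) ` V2s B"
      then obtain w where w: "w \<in> carrier_vec n" "v = S *\<^sub>v (B *\<^sub>v w)" unfolding V2s_def dB by blast
      have "v = B' *\<^sub>v (R *\<^sub>v w)" using kB[OF w(1)] w by simp
      thus "v \<in> V2s B'" unfolding V2s_def dB using Rc[OF w(1)] by blast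
    qed
  qed
  have U: "U2s A' B' = (\<lambda>w. R *\<^sub>v w) ` U2s A B"
  proof
    show "U2s A' B' \<subseteq> (\<lambda>w. R *\<^sub>v w) ` U2s A B"
    proof
      fix u assume "u \<in> U2s A' B'"
      then obtain z where u: "u \<in> carrier_vec n" "z \<in> carrier_vec n" "A' *\<^sub>v u = B' *\<^sub>v z"
        unfolding U2s_def V2s_def dB by blast
      define p where "p = Ri *\<^sub>v u"
      have p: "p \<in> carrier_vec n" "u = R *\<^sub>v p" unfolding p_def using Ric[OF u(1)] Rinv[OF u(1)] by auto
      have "S *\<^sub>v (A *\<^sub>v p) = S *\<^sub>v (B *\<^sub>v (Ri *\<^sub>v z))"
        using kA[OF p(1)] kB[OF Ric[OF u(2)]] Rinv[OF u(2)] p(2) u(3) by simp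
      hence "A *\<^sub>v p = B *\<^sub>v (Ri *\<^sub>v z)" using Scan Av p(1) Ric[OF u(2)] by blast
      hence "p \<in> U2s A B" unfolding U2s_def V2s_def dB using p(1) Ric[OF u(2)] by blast
      thus "u \<in> (\<lambda>w. R *\<^sub>v w) ` U2s A B" using p(2) by blast
    qed
    show "(\<lambda>w. R *\<^sub>v w) ` U2s A B \<subseteq> U2s A' B'"
    proof
      fix u assume "u \<in> (\<lambda>w. R *\<^sub>v w) ` U2s A B"
      then obtain p w where p: "p \<in> carrier_vec n" "w \<in> carrier_vec n" "A *\<^sub>v p = B *\<^sub>v w" "u = R *\<^sub>v p"
        unfolding U2s_def V2s_def dB by blast
      have "A' *\<^sub>v u = B' *\<^sub>v (R *\<^sub>v w)" using kA[OF p(1)] kB[OF p(2)] p by simp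
      thus "u \<in> U2s A' B'" unfolding U2s_def V2s_def dB using p Rc by blast
    qed
  qed
  have V3: "V3s A' B' = (\<lambda>w. S *\<^sub>v w) ` V3s A B"
  proof -
    have "V3s A' B' = (\<lambda>w. B' *\<^sub>v (R *\<^sub>v w)) ` U2s A B" unfolding V3s_def U by auto
    also have "\<dots> = (\<lambda>w. S *\<^sub>v (B *\<^sub>v w)) ` U2s A B" using kB by (intro image_cong) (auto simp: U2s_def dB)
    also have "\<dots> = (\<lambda>w. S *\<^sub>v w) ` V3s A B" unfolding V3s_def by auto
    finally show ?thesis .
  qed
  have RP: "basis_matrix n (U2s A' B') (R * P)" by (rule bm_transform[OF P R(1) Ri(1,3) U])
  have SQ: "basis_matrix m (V2s B') (S * Q)" by (rule bm_transform[OF Q S(1) Si(1,3) V])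
  have SQ3: "basis_matrix m (V3s A' B') (S * Q3)" by (rule bm_transform[OF Q3 S(1) Si(1,3) V3])
  obtain X where X: "X \<in> carrier_mat (dim_col P) (dim_col P')" "invertible_mat X" "P' = (R * P) * X"
    using bm_change[OF RP P'] by auto
  obtain Y where Y: "Y \<in> carrier_mat (dim_col Q) (dim_col Q')" "invertible_mat Y" "Q' = (S * Q) * Y"
    using bm_change[OF SQ Q'] by auto
  obtain Z where Z: "Z \<in> carrier_mat (dim_col Q3) (dim_col Q3')" "invertible_mat Z" "Q3' = (S * Q3) * Z"
    using bm_change[OF SQ3 Q3'] by auto
  have dP: "dim_col P' = dim_col P" using X(1,2) unfolding invertible_mat_def square_mat.simps carrier_mat_def by simp
  have dQ: "dim_col Q' = dim_col Q" using Y(1,2) unfolding invertible_mat_def square_mat.simps carrier_mat_def by simp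
  have dQ3: "dim_col Q3' = dim_col Q3" using Z(1,2) unfolding invertible_mat_def square_mat.simps carrier_mat_def by simp
  have Pc: "P \<in> carrier_mat n (dim_col P)" using P by (rule bm_carrier)
  have Qc: "Q \<in> carrier_mat m (dim_col Q)" using Q by (rule bm_carrier)
  have key: "C2 * X = Y * C2'" if C: "C \<in> carrier_mat m n" "C' \<in> carrier_mat m n" "S * C = C' * R"
    "C2 \<in> carrier_mat (dim_col Q) (dim_col P)" "C * P = Q * C2"
    "C2' \<in> carrier_mat (dim_col Q) (dim_col P)" "C' * P' = Q' * C2'" for C C' C2 C2'
  proof -
    have Xc: "X \<in> carrier_mat (dim_col P) (dim_col P)" using X(1) dP by simp
    have Yc: "Y \<in> carrier_mat (dim_col Q) (dim_col Q)" using Y(1) dQ by simp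
    have PX: "P * X \<in> carrier_mat n (dim_col P)" using mult_carrier_mat[OF Pc Xc] .
    have SQc: "S * Q \<in> carrier_mat m (dim_col Q)" using mult_carrier_mat[OF S(1) Qc] .
    have "(S * Q) * (C2 * X) = S * (Q * (C2 * X))" by (rule assoc_mult_mat[OF S(1) Qc mult_carrier_mat[OF C(4) Xc]])
    also have "\<dots> = S * ((Q * C2) * X)" by (simp only: assoc_mult_mat[OF Qc C(4) Xc])
    also have "\<dots> = S * ((C * P) * X)" by (simp only: C(5))
    also have "\<dots> = S * (C * (P * X))" by (simp only: assoc_mult_mat[OF C(1) Pc Xc])
    also have "\<dots> = (S * C) * (P * X)" by (simp only: assoc_mult_mat[OF S(1) C(1) PX])
    also have "\<dots> = (C' * R) * (P * X)" by (simp only: C(3))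
    also have "\<dots> = C' * (R * (P * X))" by (simp only: assoc_mult_mat[OF C(2) R(1) PX])
    also have "\<dots> = C' * ((R * P) * X)" by (simp only: assoc_mult_mat[OF R(1) Pc Xc])
    also have "\<dots> = C' * P'" by (simp only: X(3))
    also have "\<dots> = Q' * C2'" by (rule C(7))
    also have "\<dots> = ((S * Q) * Y) * C2'" by (simp only: Y(3))
    also have "\<dots> = (S * Q) * (Y * C2')" by (rule assoc_mult_mat[OF SQc Yc C(6)])
    finally have "(S * Q) * (C2 * X) = (S * Q) * (Y * C2')" .
    moreover have "C2 * X \<in> carrier_mat (dim_col (S * Q)) (dim_col P)" using mult_carrier_mat[OF C(4) Xc] by simp
    moreover have "Y * C2' \<in> carrier_mat (dim_col (S * Q)) (dim_col P)" using mult_carrier_mat[OF Yc C(6)] by simp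
    ultimately show ?thesis using bm_cancel[OF SQ] by blast
  qed
  have A2'c: "A2' \<in> carrier_mat (dim_col Q) (dim_col P)" "B2' \<in> carrier_mat (dim_col Q) (dim_col P)"
    using A2' dP dQ by auto
  have eA: "A2 * X = Y * A2'" using key[OF carr(1,3) eqA A2(1,3) A2'c(1) A2'(3)] .
  have eB: "B2 * X = Y * B2'" using key[OF carr(2,4) eqB A2(2,4) A2'c(2) A2'(4)] .
  have "pair_equiv (A2, B2) (A2', B2')"
    using pair_equiv_from[OF A2(1,2) A2'c _ X(2) _ Y(2) eA eB] X(1) Y(1) dP dQ by auto
  thus ?thesis using dP dQ dQ3 by blast
qed


definition appset :: "'a vec set \<Rightarrow> 'a vec set \<Rightarrow> 'a vec set" where
  "appset W W' = {w @\<^sub>v w' | w w'. w \<in> W \<and> w' \<in> W'}"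

lemma dsum_carrier: "M \<in> carrier_mat r c \<Longrightarrow> M' \<in> carrier_mat r' c' \<Longrightarrow> dsum_mat M M' \<in> carrier_mat (r + r') (c + c')"
  unfolding dsum_mat_def by (rule four_block_carrier_mat)

lemma dsum_dims[simp]: "dim_row (dsum_mat M M') = dim_row M + dim_row M'" "dim_col (dsum_mat M M') = dim_col M + dim_col M'"
  unfolding dsum_mat_def by simp_all

lemma dsum_mv: fixes M :: "'a::field mat"
  assumes M: "M \<in> carrier_mat r c" and M': "M' \<in> carrier_mat r' c'" and x: "x \<in> carrier_vec c" and x': "x' \<in> carrier_vec c'"
  shows "dsum_mat M M' *\<^sub>v (x @\<^sub>v x') = (M *\<^sub>v x) @\<^sub>v (M' *\<^sub>v x')"
proof -
  have "dsum_mat M M' *\<^sub>v (x @\<^sub>v x') = (M *\<^sub>v x + 0\<^sub>m r c' *\<^sub>v x') @\<^sub>v (0\<^sub>m r' c *\<^sub>v x + M' *\<^sub>v x')"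
  proof -
    have d: "dim_row M = r" "dim_col M = c" "dim_row M' = r'" "dim_col M' = c'" using M M' by auto
    show ?thesis unfolding dsum_mat_def d by (rule four_block_mat_mult_vec[OF M zero_carrier_mat zero_carrier_mat M' x x'])
  qed
  also have "0\<^sub>m r c' *\<^sub>v x' = 0\<^sub>v r" by (rule mv_zero2[OF x'])
  also have "0\<^sub>m r' c *\<^sub>v x = 0\<^sub>v r'" by (rule mv_zero2[OF x])
  also have "M *\<^sub>v x + 0\<^sub>v r = M *\<^sub>v x" using mult_mat_vec_carrier[OF M x] by (rule right_zero_vec)
  also have "0\<^sub>v r' + M' *\<^sub>v x' = M' *\<^sub>v x'" using mult_mat_vec_carrier[OF M' x'] by (rule left_zero_vec)
  finally show ?thesis .
qed

lemma split_vec_ex: "v \<in> carrier_vec (c + c') \<Longrightarrow> \<exists>x \<in> carrier_vec c. \<exists>x' \<in> carrier_vec c'. v = x @\<^sub>v x'"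
  by (rule bexI[of _ "vec_first v c"], rule bexI[of _ "vec_last v c'"]) auto

lemma zero_append: "0\<^sub>v a @\<^sub>v 0\<^sub>v b = (0\<^sub>v (a + b) :: 'a::zero vec)"
  by (intro eq_vecI) auto

lemma image_dsum: fixes M :: "'a::field mat"
  assumes M: "M \<in> carrier_mat r c" and M': "M' \<in> carrier_mat r' c'"
  and X: "X \<subseteq> carrier_vec c" and X': "X' \<subseteq> carrier_vec c'"
  shows "(\<lambda>u. dsum_mat M M' *\<^sub>v u) ` appset X X' = appset ((\<lambda>u. M *\<^sub>v u) ` X) ((\<lambda>u. M' *\<^sub>v u) ` X')"
proof
  show "(\<lambda>u. dsum_mat M M' *\<^sub>v u) ` appset X X' \<subseteq> appset ((\<lambda>u. M *\<^sub>v u) ` X) ((\<lambda>u. M' *\<^sub>v u) ` X')"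
  proof
    fix v assume "v \<in> (\<lambda>u. dsum_mat M M' *\<^sub>v u) ` appset X X'"
    then obtain x x' where xx: "x \<in> X" "x' \<in> X'" "v = dsum_mat M M' *\<^sub>v (x @\<^sub>v x')" unfolding appset_def by blast
    have xc: "x \<in> carrier_vec c" "x' \<in> carrier_vec c'" using X X' xx(1,2) by auto
    have "v = (M *\<^sub>v x) @\<^sub>v (M' *\<^sub>v x')" using xx(3) dsum_mv[OF M M' xc] by simp
    thus "v \<in> appset ((\<lambda>u. M *\<^sub>v u) ` X) ((\<lambda>u. M' *\<^sub>v u) ` X')" unfolding appset_def using xx by blast
  qed
  show "appset ((\<lambda>u. M *\<^sub>v u) ` X) ((\<lambda>u. M' *\<^sub>v u) ` X') \<subseteq> (\<lambda>u. dsum_mat M M' *\<^sub>v u) ` appset X X'"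
  proof
    fix v assume "v \<in> appset ((\<lambda>u. M *\<^sub>v u) ` X) ((\<lambda>u. M' *\<^sub>v u) ` X')"
    then obtain x x' where xx: "x \<in> X" "x' \<in> X'" "v = (M *\<^sub>v x) @\<^sub>v (M' *\<^sub>v x')" unfolding appset_def by blast
    have xc: "x \<in> carrier_vec c" "x' \<in> carrier_vec c'" using X X' xx(1,2) by auto
    have "v = dsum_mat M M' *\<^sub>v (x @\<^sub>v x')" using xx(3) dsum_mv[OF M M' xc] by simp
    moreover have "x @\<^sub>v x' \<in> appset X X'" unfolding appset_def using xx by blast
    ultimately show "v \<in> (\<lambda>u. dsum_mat M M' *\<^sub>v u) ` appset X X'" by blast
  qed
qed

lemma appset_carrier: "appset (carrier_vec c) (carrier_vec c') = carrier_vec (c + c')"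
proof
  show "appset (carrier_vec c) (carrier_vec c') \<subseteq> carrier_vec (c + c')" unfolding appset_def by auto
  show "carrier_vec (c + c') \<subseteq> appset (carrier_vec c) (carrier_vec c')"
    unfolding appset_def using split_vec_ex by blast
qed

lemma bm_dsum: fixes M :: "'a::field mat"
  assumes M: "basis_matrix k W M" and M': "basis_matrix k' W' M'"
  shows "basis_matrix (k + k') (appset W W') (dsum_mat M M')"
proof -
  have Mc: "M \<in> carrier_mat k (dim_col M)" using M by (rule bm_carrier)
  have Mc': "M' \<in> carrier_mat k' (dim_col M')" using M' by (rule bm_carrier)
  have DC: "dsum_mat M M' \<in> carrier_mat (k + k') (dim_col (dsum_mat M M'))"
    using dsum_carrier[OF Mc Mc'] by simp
  have W: "W = (\<lambda>x. M *\<^sub>v x) ` carrier_vec (dim_col M)" using M unfolding basis_matrix_def by blast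
  have W': "W' = (\<lambda>x. M' *\<^sub>v x) ` carrier_vec (dim_col M')" using M' unfolding basis_matrix_def by blast
  have img: "(\<lambda>x. dsum_mat M M' *\<^sub>v x) ` carrier_vec (dim_col (dsum_mat M M')) = appset W W'"
    unfolding dsum_dims appset_carrier[symmetric] W W' by (rule image_dsum[OF Mc Mc']) auto
  have inj: "x = 0\<^sub>v (dim_col (dsum_mat M M'))"
    if x: "x \<in> carrier_vec (dim_col (dsum_mat M M'))" "dsum_mat M M' *\<^sub>v x = 0\<^sub>v (k + k')" for x
  proof -
    obtain y y' where y: "y \<in> carrier_vec (dim_col M)" "y' \<in> carrier_vec (dim_col M')" "x = y @\<^sub>v y'"
      using split_vec_ex[of x "dim_col M" "dim_col M'"] x(1) by auto
    have "(M *\<^sub>v y) @\<^sub>v (M' *\<^sub>v y') = 0\<^sub>v k @\<^sub>v 0\<^sub>v k'"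
      using x(2) dsum_mv[OF Mc Mc' y(1,2)] y(3) by (simp add: zero_append)
    hence e: "M *\<^sub>v y = 0\<^sub>v k" "M' *\<^sub>v y' = 0\<^sub>v k'"
      using append_vec_eq[OF mult_mat_vec_carrier[OF Mc y(1)] zero_carrier_vec[of k]] by auto
    have "y = 0\<^sub>v (dim_col M)" using M y(1) e(1) unfolding basis_matrix_def by blast
    moreover have "y' = 0\<^sub>v (dim_col M')" using M' y(2) e(2) unfolding basis_matrix_def by blast
    ultimately show ?thesis using y(3) zero_append by simp
  qed
  show ?thesis unfolding basis_matrix_def using DC inj img by blast
qed

lemma dsum_mult: fixes A :: "'a::field mat"
  assumes A: "A \<in> carrier_mat r c" and A': "A' \<in> carrier_mat r' c'" and P: "P \<in> carrier_mat c p" and P': "P' \<in> carrier_mat c' p'"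
  shows "dsum_mat A A' * dsum_mat P P' = dsum_mat (A * P) (A' * P')"
proof -
  have "dsum_mat A A' * dsum_mat P P' = four_block_mat (A * P + 0\<^sub>m r c' * 0\<^sub>m c' p) (A * 0\<^sub>m c p' + 0\<^sub>m r c' * P')
     (0\<^sub>m r' c * P + A' * 0\<^sub>m c' p) (0\<^sub>m r' c * 0\<^sub>m c p' + A' * P')"
  proof -
    have d: "dim_row A = r" "dim_col A = c" "dim_row A' = r'" "dim_col A' = c'"
      "dim_row P = c" "dim_col P = p" "dim_row P' = c'" "dim_col P' = p'" using A A' P P' by auto
    show ?thesis unfolding dsum_mat_def d
      by (rule mult_four_block_mat[OF A zero_carrier_mat zero_carrier_mat A' P zero_carrier_mat zero_carrier_mat P'])
  qed
  also have "\<dots> = dsum_mat (A * P) (A' * P')"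
  proof -
    have d: "dim_row (A * P) = r" "dim_col (A * P) = p" "dim_row (A' * P') = r'" "dim_col (A' * P') = p'"
      using A A' P P' by auto
    have e: "A * P + 0\<^sub>m r c' * 0\<^sub>m c' p = A * P" using A P by simp
    have f: "A * 0\<^sub>m c p' + 0\<^sub>m r c' * P' = 0\<^sub>m r p'" using A P' by simp
    have g: "0\<^sub>m r' c * P + A' * 0\<^sub>m c' p = 0\<^sub>m r' p" using A' P by simp
    have h: "0\<^sub>m r' c * 0\<^sub>m c p' + A' * P' = A' * P'" using A' P' by simp
    show ?thesis unfolding dsum_mat_def d e f g h ..
  qed
  finally show ?thesis .
qed


lemma V2s_sub: "B \<in> carrier_mat r c \<Longrightarrow> V2s B \<subseteq> carrier_vec r"
  unfolding V2s_def by auto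

lemma U2s_sub: "U2s A B \<subseteq> carrier_vec (dim_col B)"
  unfolding U2s_def by auto

lemma V2s_dsum: fixes B :: "'a::field mat"
  assumes B: "B \<in> carrier_mat r c" and B': "B' \<in> carrier_mat r' c'"
  shows "V2s (dsum_mat B B') = appset (V2s B) (V2s B')"
proof -
  have d: "dim_col (dsum_mat B B') = c + c'" "dim_col B = c" "dim_col B' = c'" using B B' by auto
  show ?thesis unfolding V2s_def d appset_carrier[symmetric] by (rule image_dsum[OF B B']) auto
qed

lemma U2s_dsum: fixes A B :: "'a::field mat"
  assumes A: "A \<in> carrier_mat r c" and B: "B \<in> carrier_mat r c"
  and A': "A' \<in> carrier_mat r' c'" and B': "B' \<in> carrier_mat r' c'"
  shows "U2s (dsum_mat A A') (dsum_mat B B') = appset (U2s A B) (U2s A' B')"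
proof
  have d: "dim_col (dsum_mat B B') = c + c'" "dim_col B = c" "dim_col B' = c'" using B B' by auto
  show "U2s (dsum_mat A A') (dsum_mat B B') \<subseteq> appset (U2s A B) (U2s A' B')"
  proof
    fix u assume u: "u \<in> U2s (dsum_mat A A') (dsum_mat B B')"
    hence uc: "u \<in> carrier_vec (c + c')" and uv: "dsum_mat A A' *\<^sub>v u \<in> appset (V2s B) (V2s B')"
      unfolding U2s_def d V2s_dsum[OF B B'] by auto
    obtain x x' where x: "x \<in> carrier_vec c" "x' \<in> carrier_vec c'" "u = x @\<^sub>v x'"
      using split_vec_ex[OF uc] by blast
    obtain w w' where w: "w \<in> V2s B" "w' \<in> V2s B'" "dsum_mat A A' *\<^sub>v u = w @\<^sub>v w'"
      using uv unfolding appset_def by blast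
    have wc: "w \<in> carrier_vec r" using w(1) V2s_sub[OF B] by blast
    have "(A *\<^sub>v x) @\<^sub>v (A' *\<^sub>v x') = w @\<^sub>v w'" using w(3) x(3) dsum_mv[OF A A' x(1,2)] by simp
    hence e: "A *\<^sub>v x = w" "A' *\<^sub>v x' = w'" using append_vec_eq[OF mult_mat_vec_carrier[OF A x(1)] wc] by auto
    have "x \<in> U2s A B" unfolding U2s_def d using x(1) e(1) w(1) by blast
    moreover have "x' \<in> U2s A' B'" unfolding U2s_def d using x(2) e(2) w(2) by blast
    ultimately show "u \<in> appset (U2s A B) (U2s A' B')" unfolding appset_def using x(3) by blast
  qed
  show "appset (U2s A B) (U2s A' B') \<subseteq> U2s (dsum_mat A A') (dsum_mat B B')"
  proof
    fix u assume "u \<in> appset (U2s A B) (U2s A' B')"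
    then obtain x x' where x: "x \<in> U2s A B" "x' \<in> U2s A' B'" "u = x @\<^sub>v x'" unfolding appset_def by blast
    have xc: "x \<in> carrier_vec c" "x' \<in> carrier_vec c'" "A *\<^sub>v x \<in> V2s B" "A' *\<^sub>v x' \<in> V2s B'"
      using x(1,2) unfolding U2s_def d by auto
    have "dsum_mat A A' *\<^sub>v u = (A *\<^sub>v x) @\<^sub>v (A' *\<^sub>v x')" using x(3) dsum_mv[OF A A' xc(1,2)] by simp
    hence "dsum_mat A A' *\<^sub>v u \<in> appset (V2s B) (V2s B')" unfolding appset_def using xc(3,4) by blast
    moreover have "u \<in> carrier_vec (c + c')" using x(3) xc(1,2) by simp
    ultimately show "u \<in> U2s (dsum_mat A A') (dsum_mat B B')" unfolding U2s_def d V2s_dsum[OF B B'] by blast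
  qed
qed

lemma V3s_dsum: fixes A B :: "'a::field mat"
  assumes A: "A \<in> carrier_mat r c" and B: "B \<in> carrier_mat r c"
  and A': "A' \<in> carrier_mat r' c'" and B': "B' \<in> carrier_mat r' c'"
  shows "V3s (dsum_mat A A') (dsum_mat B B') = appset (V3s A B) (V3s A' B')"
proof -
  have d: "dim_col B = c" "dim_col B' = c'" using B B' by auto
  show ?thesis unfolding V3s_def U2s_dsum[OF A B A' B']
    by (rule image_dsum[OF B B']) (use U2s_sub[of A B] U2s_sub[of A' B'] d in auto)
qed

definition redp :: "'a::field mat \<Rightarrow> 'a mat \<Rightarrow> 'a mat \<Rightarrow> 'a mat \<Rightarrow> nat \<Rightarrow> nat \<Rightarrow> nat \<Rightarrow> bool" where
  "redp A B A2 B2 d e f \<longleftrightarrow> B \<in> carrier_mat (dim_row A) (dim_col A) \<and> A2 \<in> carrier_mat e d \<and> B2 \<in> carrier_mat e d \<and>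
   (\<exists>P Q G. basis_matrix (dim_col A) (U2s A B) P \<and> basis_matrix (dim_row A) (V2s B) Q \<and> basis_matrix e (V2s B2) G \<and>
     dim_col P = d \<and> dim_col Q = e \<and> dim_col G = f \<and> A * P = Q * A2 \<and> B * P = Q * B2)"

lemma redp_dsum: fixes A B :: "'a::field mat"
  assumes R1: "redp A B A2 B2 d e f" and R2: "redp A' B' A2' B2' d' e' f'"
  shows "redp (dsum_mat A A') (dsum_mat B B') (dsum_mat A2 A2') (dsum_mat B2 B2') (d + d') (e + e') (f + f')"
proof -
  obtain P Q G where B: "B \<in> carrier_mat (dim_row A) (dim_col A)" and A2: "A2 \<in> carrier_mat e d" "B2 \<in> carrier_mat e d"
    and P: "basis_matrix (dim_col A) (U2s A B) P" and Q: "basis_matrix (dim_row A) (V2s B) Q" and G: "basis_matrix e (V2s B2) G"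
    and dd: "dim_col P = d" "dim_col Q = e" "dim_col G = f" and eq: "A * P = Q * A2" "B * P = Q * B2"
    using R1 unfolding redp_def by blast
  obtain P' Q' G' where B': "B' \<in> carrier_mat (dim_row A') (dim_col A')" and A2': "A2' \<in> carrier_mat e' d'" "B2' \<in> carrier_mat e' d'"
    and P': "basis_matrix (dim_col A') (U2s A' B') P'" and Q': "basis_matrix (dim_row A') (V2s B') Q'" and G': "basis_matrix e' (V2s B2') G'"
    and dd': "dim_col P' = d'" "dim_col Q' = e'" "dim_col G' = f'" and eq': "A' * P' = Q' * A2'" "B' * P' = Q' * B2'"
    using R2 unfolding redp_def by blast
  have A: "A \<in> carrier_mat (dim_row A) (dim_col A)" by (rule carrier_matI) auto
  have A': "A' \<in> carrier_mat (dim_row A') (dim_col A')" by (rule carrier_matI) auto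
  have Pc: "P \<in> carrier_mat (dim_col A) d" using bm_carrier[OF P] dd by simp
  have Qc: "Q \<in> carrier_mat (dim_row A) e" using bm_carrier[OF Q] dd by simp
  have Pc': "P' \<in> carrier_mat (dim_col A') d'" using bm_carrier[OF P'] dd' by simp
  have Qc': "Q' \<in> carrier_mat (dim_row A') e'" using bm_carrier[OF Q'] dd' by simp
  have c1: "dsum_mat B B' \<in> carrier_mat (dim_row (dsum_mat A A')) (dim_col (dsum_mat A A'))"
    using dsum_carrier[OF B B'] by simp
  have c2: "dsum_mat A2 A2' \<in> carrier_mat (e + e') (d + d')" "dsum_mat B2 B2' \<in> carrier_mat (e + e') (d + d')"
    using dsum_carrier[OF A2(1) A2'(1)] dsum_carrier[OF A2(2) A2'(2)] by auto
  have bP: "basis_matrix (dim_col (dsum_mat A A')) (U2s (dsum_mat A A') (dsum_mat B B')) (dsum_mat P P')"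
    using bm_dsum[OF P P'] U2s_dsum[OF A B A' B'] by simp
  have bQ: "basis_matrix (dim_row (dsum_mat A A')) (V2s (dsum_mat B B')) (dsum_mat Q Q')"
    using bm_dsum[OF Q Q'] V2s_dsum[OF B B'] by simp
  have bG: "basis_matrix (e + e') (V2s (dsum_mat B2 B2')) (dsum_mat G G')"
    using bm_dsum[OF G G'] V2s_dsum[OF A2(2) A2'(2)] by simp
  have e1: "dsum_mat A A' * dsum_mat P P' = dsum_mat Q Q' * dsum_mat A2 A2'"
    using dsum_mult[OF A A' Pc Pc'] dsum_mult[OF Qc Qc' A2(1) A2'(1)] eq(1) eq'(1) by simp
  have e2: "dsum_mat B B' * dsum_mat P P' = dsum_mat Q Q' * dsum_mat B2 B2'"
    using dsum_mult[OF B B' Pc Pc'] dsum_mult[OF Qc Qc' A2(2) A2'(2)] eq(2) eq'(2) by simp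
  show ?thesis unfolding redp_def using c1 c2 bP bQ bG e1 e2 dd dd' by (intro conjI exI[of _ "dsum_mat P P'"] exI[of _ "dsum_mat Q Q'"] exI[of _ "dsum_mat G G'"]) auto
qed


lemma bm_compose: fixes Q :: "'a::field mat"
  assumes Q: "basis_matrix m V Q" and G: "basis_matrix (dim_col Q) W G"
  shows "basis_matrix m ((\<lambda>w. Q *\<^sub>v w) ` W) (Q * G)"
proof -
  have Qc: "Q \<in> carrier_mat m (dim_col Q)" using Q by (rule bm_carrier)
  have Gc: "G \<in> carrier_mat (dim_col Q) (dim_col G)" using G by (rule bm_carrier)
  have QG: "Q * G \<in> carrier_mat m (dim_col (Q * G))" using mult_carrier_mat[OF Qc Gc] by simp
  have dc: "dim_col (Q * G) = dim_col G" by simp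
  have mv: "(Q * G) *\<^sub>v x = Q *\<^sub>v (G *\<^sub>v x)" if "x \<in> carrier_vec (dim_col G)" for x
    using assoc_mult_mat_vec[OF Qc Gc that] .
  have inj: "x = 0\<^sub>v (dim_col (Q * G))" if x: "x \<in> carrier_vec (dim_col (Q * G))" "(Q * G) *\<^sub>v x = 0\<^sub>v m" for x
  proof -
    have x1: "x \<in> carrier_vec (dim_col G)" using x(1) by simp
    have "Q *\<^sub>v (G *\<^sub>v x) = Q *\<^sub>v 0\<^sub>v (dim_col Q)" using x(2) mv[OF x1] mv_zero[OF Qc] by simp
    hence "G *\<^sub>v x = 0\<^sub>v (dim_col Q)" using bm_inj[OF Q mult_mat_vec_carrier[OF Gc x1] zero_carrier_vec] by blast
    hence "x = 0\<^sub>v (dim_col G)" using G x1 unfolding basis_matrix_def by blast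
    thus ?thesis by simp
  qed
  have W: "W = (\<lambda>x. G *\<^sub>v x) ` carrier_vec (dim_col G)" using G unfolding basis_matrix_def by blast
  have img: "(\<lambda>x. (Q * G) *\<^sub>v x) ` carrier_vec (dim_col (Q * G)) = (\<lambda>w. Q *\<^sub>v w) ` W"
  proof -
    have "(\<lambda>w. Q *\<^sub>v w) ` W = (\<lambda>x. Q *\<^sub>v (G *\<^sub>v x)) ` carrier_vec (dim_col G)" unfolding W by auto
    also have "\<dots> = (\<lambda>x. (Q * G) *\<^sub>v x) ` carrier_vec (dim_col G)" using mv by (intro image_cong) auto
    finally show ?thesis by simp
  qed
  show ?thesis unfolding basis_matrix_def using QG inj img by blast
qed

lemma redp_V3: fixes A B :: "'a::field mat"
  assumes R: "redp A B A2 B2 d e f"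
  shows "\<exists>P Q Q3. basis_matrix (dim_col A) (U2s A B) P \<and> basis_matrix (dim_row A) (V2s B) Q \<and>
     basis_matrix (dim_row A) (V3s A B) Q3 \<and> dim_col P = d \<and> dim_col Q = e \<and> dim_col Q3 = f \<and>
     A * P = Q * A2 \<and> B * P = Q * B2"
proof -
  obtain P Q G where B: "B \<in> carrier_mat (dim_row A) (dim_col A)" and A2: "A2 \<in> carrier_mat e d" "B2 \<in> carrier_mat e d"
    and P: "basis_matrix (dim_col A) (U2s A B) P" and Q: "basis_matrix (dim_row A) (V2s B) Q" and G: "basis_matrix e (V2s B2) G"
    and dd: "dim_col P = d" "dim_col Q = e" "dim_col G = f" and eq: "A * P = Q * A2" "B * P = Q * B2"
    using R unfolding redp_def by blast
  have Pc: "P \<in> carrier_mat (dim_col A) d" using bm_carrier[OF P] dd by simp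
  have Qc: "Q \<in> carrier_mat (dim_row A) e" using bm_carrier[OF Q] dd by simp
  have U: "U2s A B = (\<lambda>x. P *\<^sub>v x) ` carrier_vec d" using P dd unfolding basis_matrix_def by blast
  have k: "B *\<^sub>v (P *\<^sub>v x) = Q *\<^sub>v (B2 *\<^sub>v x)" if "x \<in> carrier_vec d" for x
  proof -
    have "B *\<^sub>v (P *\<^sub>v x) = (B * P) *\<^sub>v x" using assoc_mult_mat_vec[OF B Pc that] by simp
    also have "\<dots> = (Q * B2) *\<^sub>v x" using eq(2) by simp
    also have "\<dots> = Q *\<^sub>v (B2 *\<^sub>v x)" using assoc_mult_mat_vec[OF Qc A2(2) that] .
    finally show ?thesis .
  qed
  have V3: "V3s A B = (\<lambda>w. Q *\<^sub>v w) ` V2s B2"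
  proof -
    have dB2: "dim_col B2 = d" using A2(2) by simp
    have "V3s A B = (\<lambda>x. B *\<^sub>v (P *\<^sub>v x)) ` carrier_vec d" unfolding V3s_def U by auto
    also have "\<dots> = (\<lambda>x. Q *\<^sub>v (B2 *\<^sub>v x)) ` carrier_vec d" using k by (intro image_cong) auto
    also have "\<dots> = (\<lambda>w. Q *\<^sub>v w) ` V2s B2" unfolding V2s_def dB2 by auto
    finally show ?thesis .
  qed
  have G': "basis_matrix (dim_col Q) (V2s B2) G" using G dd by simp
  have Q3: "basis_matrix (dim_row A) (V3s A B) (Q * G)" unfolding V3 by (rule bm_compose[OF Q G'])
  have "dim_col (Q * G) = f" using dd by simp
  thus ?thesis using P Q Q3 dd eq by blast
qed

abbreviation Emat :: "nat \<Rightarrow> 'a::field mat" where "Emat j \<equiv> transpose_mat (Rmat j)"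
lemma a1: "Rmat j \<in> carrier_mat (j - 1) j" unfolding Rmat_def by (rule mat_carrier)
lemma Emat_carrier: "Emat j \<in> carrier_mat j (j - 1)"
  using a1[of j] by simp
lemma Rmat_index: "l < j - 1 \<Longrightarrow> i < j \<Longrightarrow> (Rmat j :: 'a::field mat) $$ (l, i) = (if i = l + 1 then 1 else 0)"
  unfolding Rmat_def by (rule trans[OF index_mat(1)]) auto
lemma Rmat_dims[simp]: "dim_row (Rmat j) = j - 1" "dim_col (Rmat j) = j"
  unfolding Rmat_def by simp_all
lemma Emat_index: "i < j \<Longrightarrow> l < j - 1 \<Longrightarrow> (Emat j :: 'a::field mat) $$ (i, l) = (if i = l + 1 then 1 else 0)"
  by (subst index_transpose_mat(1)) (auto simp: Rmat_index)
lemma Emat_mv: assumes x: "(x :: 'a::field vec) \<in> carrier_vec (j - 1)"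
  shows "Emat j *\<^sub>v x = vec j (\<lambda>i. if i = 0 then 0 else x $ (i - 1))"
proof (rule eq_vecI)
  have Ec: "Emat j \<in> carrier_mat j (j - 1)" by (rule Emat_carrier)
  fix i assume "i < dim_vec (vec j (\<lambda>i. if i = 0 then 0 else x $ (i - 1)))"
  hence i: "i < j" by simp
  have "(Emat j *\<^sub>v x) $ i = row (Emat j) i \<bullet> x" using i by simp
  also have "row (Emat j :: 'a mat) i = (if i = 0 then 0\<^sub>v (j - 1) else unit_vec (j - 1) (i - 1))"
  proof (rule eq_vecI)
    fix l assume "l < dim_vec (if i = 0 then 0\<^sub>v (j - 1) else unit_vec (j - 1) (i - 1) :: 'a vec)"
    hence l: "l < j - 1" by (cases "i = 0") auto
    show "row (Emat j :: 'a mat) i $ l = (if i = 0 then 0\<^sub>v (j - 1) else unit_vec (j - 1) (i - 1)) $ l"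
      using i l Emat_index[OF i l] by (auto simp: unit_vec_def)
  qed simp
  finally show "(Emat j *\<^sub>v x) $ i = vec j (\<lambda>i. if i = 0 then 0 else x $ (i - 1)) $ i"
    using i x by (cases "i = 0") auto
qed simp

lemma shift_mv: fixes M :: "'a::field mat"
  assumes M: "M \<in> carrier_mat r c" and ent: "\<And>i l. i < r \<Longrightarrow> l < c \<Longrightarrow> M $$ (i, l) = (if l + a = i + b then 1 else 0)"
  and x: "x \<in> carrier_vec c"
  shows "M *\<^sub>v x = vec r (\<lambda>i. if a \<le> i + b \<and> i + b - a < c then x $ (i + b - a) else 0)"
proof (rule eq_vecI)
  fix i assume "i < dim_vec (vec r (\<lambda>i. if a \<le> i + b \<and> i + b - a < c then x $ (i + b - a) else 0))"
  hence i: "i < r" by simp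
  have "(M *\<^sub>v x) $ i = row M i \<bullet> x" using i M by simp
  also have "row M i = (if a \<le> i + b \<and> i + b - a < c then unit_vec c (i + b - a) else 0\<^sub>v c)"
  proof (rule eq_vecI)
    fix l assume "l < dim_vec (if a \<le> i + b \<and> i + b - a < c then unit_vec c (i + b - a) else 0\<^sub>v c :: 'a vec)"
    hence l: "l < c" by (auto split: if_splits)
    show "row M i $ l = (if a \<le> i + b \<and> i + b - a < c then unit_vec c (i + b - a) else 0\<^sub>v c :: 'a vec) $ l"
      using i l M ent[OF i l] by (auto simp: unit_vec_def)
  qed (use M in simp)
  finally show "(M *\<^sub>v x) $ i = vec r (\<lambda>i. if a \<le> i + b \<and> i + b - a < c then x $ (i + b - a) else 0) $ i"
    using i x by (cases "a \<le> i + b \<and> i + b - a < c") auto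
qed (use M in simp)

lemma jordan0_carrier: "(jordan0 k :: 'a::field mat) \<in> carrier_mat k k"
  unfolding jordan0_def by (rule mat_carrier)
lemma jordan0_index: "i < k \<Longrightarrow> l < k \<Longrightarrow> (jordan0 k :: 'a::field mat) $$ (i, l) = (if l + 1 = i + 0 then 1 else 0)"
  unfolding jordan0_def by (rule trans[OF index_mat(1)]) auto
lemma Lmat_carrier: "(Lmat k :: 'a::field mat) \<in> carrier_mat (k - 1) k"
  unfolding Lmat_def by (rule mat_carrier)
lemma Lmat_index: "l < k - 1 \<Longrightarrow> i < k \<Longrightarrow> (Lmat k :: 'a::field mat) $$ (l, i) = (if i = l then 1 else 0)"
  unfolding Lmat_def by (rule trans[OF index_mat(1)]) auto
lemma Lmat_dims[simp]: "dim_row (Lmat j) = j - 1" "dim_col (Lmat j) = j"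
  unfolding Lmat_def by simp_all
lemma Rmat_carrier: "(Rmat k :: 'a::field mat) \<in> carrier_mat (k - 1) k"
  unfolding Rmat_def by (rule mat_carrier)
lemma LTmat_carrier: "(transpose_mat (Lmat k) :: 'a::field mat) \<in> carrier_mat k (k - 1)"
  using Lmat_carrier[of k] by simp
lemma LTmat_index: "i < k \<Longrightarrow> l < k - 1 \<Longrightarrow> (transpose_mat (Lmat k) :: 'a::field mat) $$ (i, l) = (if l + 0 = i + 0 then 1 else 0)"
  by (subst index_transpose_mat(1)) (auto simp: Lmat_index)

lemma jordan0_mv: "x \<in> carrier_vec k \<Longrightarrow> (jordan0 k :: 'a::field mat) *\<^sub>v x = vec k (\<lambda>i. if i = 0 then 0 else x $ (i - 1))"
  by (subst shift_mv[OF jordan0_carrier jordan0_index]) (auto intro!: eq_vecI)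
lemma LT_mv: "x \<in> carrier_vec (k - 1) \<Longrightarrow> (transpose_mat (Lmat k) :: 'a::field mat) *\<^sub>v x = vec k (\<lambda>i. if i < k - 1 then x $ i else 0)"
  by (subst shift_mv[OF LTmat_carrier LTmat_index]) (auto intro!: eq_vecI)
lemma Rmat_index': "i < k - 1 \<Longrightarrow> l < k \<Longrightarrow> (Rmat k :: 'a::field mat) $$ (i, l) = (if l + 0 = i + 1 then 1 else 0)"
  using Rmat_index[of i k l] by simp
lemma R_mv: "x \<in> carrier_vec k \<Longrightarrow> (Rmat k :: 'a::field mat) *\<^sub>v x = vec (k - 1) (\<lambda>i. x $ (i + 1))"
  by (subst shift_mv[OF Rmat_carrier Rmat_index']) (auto intro!: eq_vecI)



definition Zs :: "nat \<Rightarrow> 'a::field vec set" where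
  "Zs j = {v \<in> carrier_vec j. 0 < j \<longrightarrow> v $ 0 = 0}"

lemma jordan0_dims[simp]: "dim_row (jordan0 k) = k" "dim_col (jordan0 k) = k"
  unfolding jordan0_def by simp_all

lemma Zs_def2: "v \<in> Zs j \<longleftrightarrow> v \<in> carrier_vec j \<and> (0 < j \<longrightarrow> v $ 0 = 0)"
  unfolding Zs_def by simp

lemma bm_Emat: "basis_matrix j (Zs j) (Emat j :: 'a::field mat)"
proof -
  have Ec: "(Emat j :: 'a mat) \<in> carrier_mat j (dim_col (Emat j :: 'a mat))" using Emat_carrier[of j] by simp
  have dc: "dim_col (Emat j :: 'a mat) = j - 1" by simp
  have inj: "x = 0\<^sub>v (j - 1)" if x: "x \<in> carrier_vec (j - 1)" "(Emat j :: 'a mat) *\<^sub>v x = 0\<^sub>v j" for x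
  proof (rule eq_vecI)
    fix l assume "l < dim_vec (0\<^sub>v (j - 1) :: 'a vec)"
    hence l: "l < j - 1" by simp
    have "((Emat j :: 'a mat) *\<^sub>v x) $ (l + 1) = x $ l" using Emat_mv[OF x(1)] l by simp
    thus "x $ l = 0\<^sub>v (j - 1) $ l" using x(2) l by simp
  qed (use x in simp)
  have img: "(\<lambda>x. (Emat j :: 'a mat) *\<^sub>v x) ` carrier_vec (j - 1) = Zs j"
  proof
    show "(\<lambda>x. (Emat j :: 'a mat) *\<^sub>v x) ` carrier_vec (j - 1) \<subseteq> Zs j"
    proof
      fix v assume "v \<in> (\<lambda>x. (Emat j :: 'a mat) *\<^sub>v x) ` carrier_vec (j - 1)"
      then obtain x where x: "x \<in> carrier_vec (j - 1)" "v = (Emat j :: 'a mat) *\<^sub>v x" by blast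
      show "v \<in> Zs j" unfolding x(2) Emat_mv[OF x(1)] Zs_def2 by simp
    qed
    show "Zs j \<subseteq> (\<lambda>x. (Emat j :: 'a mat) *\<^sub>v x) ` carrier_vec (j - 1)"
    proof
      fix v :: "'a vec" assume v: "v \<in> Zs j"
      define x where "x = vec (j - 1) (\<lambda>l. v $ (l + 1))"
      have xc: "x \<in> carrier_vec (j - 1)" unfolding x_def by simp
      have "(Emat j :: 'a mat) *\<^sub>v x = v"
        unfolding Emat_mv[OF xc] using v unfolding Zs_def2 x_def by (intro eq_vecI) auto
      thus "v \<in> (\<lambda>x. (Emat j :: 'a mat) *\<^sub>v x) ` carrier_vec (j - 1)" using xc by blast
    qed
  qed
  show ?thesis unfolding basis_matrix_def dc using Ec inj img by (simp add: dc)
qed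

lemma V2s_Emat: "V2s (Emat j :: 'a::field mat) = Zs j"
  using bm_Emat[of j] unfolding basis_matrix_def V2s_def by (metis (no_types, lifting))

lemma V2s_jordan0: "V2s (jordan0 k :: 'a::field mat) = Zs k"
proof -
  have dc: "dim_col (jordan0 k :: 'a mat) = k" by simp
  show ?thesis unfolding V2s_def dc
  proof
    show "(\<lambda>u. (jordan0 k :: 'a mat) *\<^sub>v u) ` carrier_vec k \<subseteq> Zs k"
    proof
      fix v assume "v \<in> (\<lambda>x. (jordan0 k :: 'a mat) *\<^sub>v x) ` carrier_vec k"
      then obtain x where x: "x \<in> carrier_vec k" "v = (jordan0 k :: 'a mat) *\<^sub>v x" by blast
      show "v \<in> Zs k" unfolding x(2) jordan0_mv[OF x(1)] Zs_def2 by simp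
    qed
    show "Zs k \<subseteq> (\<lambda>u. (jordan0 k :: 'a mat) *\<^sub>v u) ` carrier_vec k"
    proof
      fix v :: "'a vec" assume v: "v \<in> Zs k"
      define x where "x = vec k (\<lambda>l. if l + 1 < k then v $ (l + 1) else 0)"
      have xc: "x \<in> carrier_vec k" unfolding x_def by simp
      have "(jordan0 k :: 'a mat) *\<^sub>v x = v"
        unfolding jordan0_mv[OF xc] using v unfolding Zs_def2 x_def by (intro eq_vecI) auto
      thus "v \<in> (\<lambda>u. (jordan0 k :: 'a mat) *\<^sub>v u) ` carrier_vec k" using xc by blast
    qed
  qed
qed

lemma U2s_IJ: "U2s (1\<^sub>m k :: 'a::field mat) (jordan0 k) = Zs k"
proof -
  have dc: "dim_col (jordan0 k :: 'a mat) = k" by simp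
  show ?thesis unfolding U2s_def dc V2s_jordan0 by (auto simp: Zs_def2)
qed

lemma U2s_LRT: assumes k: "1 \<le> k" shows "U2s (transpose_mat (Lmat k) :: 'a::field mat) (Emat k) = Zs (k - 1)"
proof -
  have dc: "dim_col (Emat k :: 'a mat) = k - 1" by simp
  have "u \<in> carrier_vec (k - 1) \<and> transpose_mat (Lmat k) *\<^sub>v u \<in> Zs k \<longleftrightarrow> u \<in> Zs (k - 1)" for u :: "'a vec"
  proof (cases "u \<in> carrier_vec (k - 1)")
    case True
    show ?thesis unfolding Zs_def2 LT_mv[OF True] using True k by auto
  next
    case False
    thus ?thesis unfolding Zs_def2 by auto
  qed
  thus ?thesis unfolding U2s_def dc V2s_Emat by auto
qed

lemma V2s_Rmat: "V2s (Rmat k :: 'a::field mat) = carrier_vec (k - 1)"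
proof -
  show ?thesis unfolding V2s_def Rmat_dims
  proof
    show "(\<lambda>u. (Rmat k :: 'a mat) *\<^sub>v u) ` carrier_vec k \<subseteq> carrier_vec (k - 1)"
    proof
      fix v assume "v \<in> (\<lambda>x. (Rmat k :: 'a mat) *\<^sub>v x) ` carrier_vec k"
      then obtain x where x: "x \<in> carrier_vec k" "v = (Rmat k :: 'a mat) *\<^sub>v x" by blast
      show "v \<in> carrier_vec (k - 1)" unfolding x(2) R_mv[OF x(1)] by simp
    qed
    show "carrier_vec (k - 1) \<subseteq> (\<lambda>u. (Rmat k :: 'a mat) *\<^sub>v u) ` carrier_vec k"
    proof
      fix v :: "'a vec" assume v: "v \<in> carrier_vec (k - 1)"
      define x where "x = vec k (\<lambda>l. if l = 0 then 0 else v $ (l - 1))"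
      have xc: "x \<in> carrier_vec k" unfolding x_def by simp
      have "(Rmat k :: 'a mat) *\<^sub>v x = v"
        unfolding R_mv[OF xc] using v unfolding x_def by (intro eq_vecI) auto
      thus "v \<in> (\<lambda>u. (Rmat k :: 'a mat) *\<^sub>v u) ` carrier_vec k" using xc by blast
    qed
  qed
qed

lemma V2s_one: "V2s (1\<^sub>m k :: 'a::field mat) = carrier_vec k"
  unfolding V2s_def by (auto intro!: image_eqI)

lemma V2s_inv: fixes D :: "'a::field mat" assumes D: "D \<in> carrier_mat r r" "invertible_mat D"
  shows "V2s D = carrier_vec r"
proof -
  obtain Di where Di: "Di \<in> carrier_mat r r" "D * Di = 1\<^sub>m r" "Di * D = 1\<^sub>m r" using inv_obtain[OF D(2) D(1)] by blast
  have dc: "dim_col D = r" using D by simp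
  show ?thesis unfolding V2s_def dc
  proof
    show "(\<lambda>u. D *\<^sub>v u) ` carrier_vec r \<subseteq> carrier_vec r" using D(1) by auto
    show "carrier_vec r \<subseteq> (\<lambda>u. D *\<^sub>v u) ` carrier_vec r"
    proof
      fix v :: "'a vec" assume v: "v \<in> carrier_vec r"
      have "D *\<^sub>v (Di *\<^sub>v v) = v" using vec_inv[OF D(1) Di(1,2) v] .
      moreover have "Di *\<^sub>v v \<in> carrier_vec r" using Di(1) v by simp
      ultimately show "v \<in> (\<lambda>u. D *\<^sub>v u) ` carrier_vec r" by (metis image_eqI)
    qed
  qed
qed

lemma bm_one: "basis_matrix k (carrier_vec k) (1\<^sub>m k :: 'a::field mat)"
  unfolding basis_matrix_def by (auto intro!: image_eqI)


lemma mat_eq_mv: fixes A B :: "'a::field mat"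
  assumes A: "A \<in> carrier_mat r c" and B: "B \<in> carrier_mat r c" and e: "\<And>x. x \<in> carrier_vec c \<Longrightarrow> A *\<^sub>v x = B *\<^sub>v x"
  shows "A = B"
proof (rule mat_col_eqI)
  fix j assume "j < dim_col B"
  hence j: "j < c" using B by simp
  show "col A j = col B j" using col_as_mult[OF A j] col_as_mult[OF B j] e[of "unit_vec c j"] by simp
qed (use A B in auto)

lemma JE: "(jordan0 k :: 'a::field mat) * Emat k = Emat k * jordan0 (k - 1)"
proof (rule mat_eq_mv)
  show "(jordan0 k :: 'a mat) * Emat k \<in> carrier_mat k (k - 1)" using jordan0_carrier Emat_carrier by (rule mult_carrier_mat)
  show "(Emat k :: 'a mat) * jordan0 (k - 1) \<in> carrier_mat k (k - 1)" using Emat_carrier jordan0_carrier by (rule mult_carrier_mat)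
  fix x :: "'a vec" assume x: "x \<in> carrier_vec (k - 1)"
  have Ex: "Emat k *\<^sub>v x \<in> carrier_vec k" using mult_mat_vec_carrier[OF Emat_carrier x] .
  have Jx: "jordan0 (k - 1) *\<^sub>v x \<in> carrier_vec (k - 1)" using mult_mat_vec_carrier[OF jordan0_carrier x] .
  have "((jordan0 k :: 'a mat) * Emat k) *\<^sub>v x = jordan0 k *\<^sub>v (Emat k *\<^sub>v x)"
    using assoc_mult_mat_vec[OF jordan0_carrier Emat_carrier x] .
  also have "\<dots> = vec k (\<lambda>i. if i = 0 then 0 else (Emat k *\<^sub>v x) $ (i - 1))" by (rule jordan0_mv[OF Ex])
  also have "\<dots> = vec k (\<lambda>i. if i = 0 then 0 else (jordan0 (k - 1) *\<^sub>v x) $ (i - 1))"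
    unfolding Emat_mv[OF x] jordan0_mv[OF x] by (intro eq_vecI) auto
  also have "\<dots> = Emat k *\<^sub>v (jordan0 (k - 1) *\<^sub>v x)" by (rule Emat_mv[OF Jx, symmetric])
  also have "\<dots> = (Emat k * jordan0 (k - 1)) *\<^sub>v x"
    using assoc_mult_mat_vec[OF Emat_carrier jordan0_carrier x] by simp
  finally show "((jordan0 k :: 'a mat) * Emat k) *\<^sub>v x = (Emat k * jordan0 (k - 1)) *\<^sub>v x" .
qed

lemma LE: "(transpose_mat (Lmat k) :: 'a::field mat) * Emat (k - 1) = Emat k * transpose_mat (Lmat (k - 1))"
proof (rule mat_eq_mv)
  show "(transpose_mat (Lmat k) :: 'a mat) * Emat (k - 1) \<in> carrier_mat k (k - 1 - 1)" using LTmat_carrier Emat_carrier by (rule mult_carrier_mat)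
  show "(Emat k :: 'a mat) * transpose_mat (Lmat (k - 1)) \<in> carrier_mat k (k - 1 - 1)" using Emat_carrier LTmat_carrier by (rule mult_carrier_mat)
  fix x :: "'a vec" assume x: "x \<in> carrier_vec (k - 1 - 1)"
  have Ex: "Emat (k - 1) *\<^sub>v x \<in> carrier_vec (k - 1)" using mult_mat_vec_carrier[OF Emat_carrier x] .
  have Lx: "transpose_mat (Lmat (k - 1)) *\<^sub>v x \<in> carrier_vec (k - 1)" using mult_mat_vec_carrier[OF LTmat_carrier x] .
  have "((transpose_mat (Lmat k) :: 'a mat) * Emat (k - 1)) *\<^sub>v x = transpose_mat (Lmat k) *\<^sub>v (Emat (k - 1) *\<^sub>v x)"
    using assoc_mult_mat_vec[OF LTmat_carrier Emat_carrier x] .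
  also have "\<dots> = vec k (\<lambda>i. if i < k - 1 then (Emat (k - 1) *\<^sub>v x) $ i else 0)" by (rule LT_mv[OF Ex])
  also have "\<dots> = vec k (\<lambda>i. if i = 0 then 0 else (transpose_mat (Lmat (k - 1)) *\<^sub>v x) $ (i - 1))"
    unfolding Emat_mv[OF x] LT_mv[OF x] by (intro eq_vecI) auto
  also have "\<dots> = Emat k *\<^sub>v (transpose_mat (Lmat (k - 1)) *\<^sub>v x)" by (rule Emat_mv[OF Lx, symmetric])
  also have "\<dots> = (Emat k * transpose_mat (Lmat (k - 1))) *\<^sub>v x"
    using assoc_mult_mat_vec[OF Emat_carrier LTmat_carrier x] by simp
  finally show "((transpose_mat (Lmat k) :: 'a mat) * Emat (k - 1)) *\<^sub>v x = (Emat k * transpose_mat (Lmat (k - 1))) *\<^sub>v x" .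
qed

lemma redp_surj: fixes A B :: "'a::field mat"
  assumes A: "A \<in> carrier_mat r c" and B: "B \<in> carrier_mat r c" and S: "V2s B = carrier_vec r"
  shows "redp A B A B c r r"
proof -
  have d: "dim_row A = r" "dim_col A = c" "dim_col B = c" using A B by auto
  have U: "U2s A B = carrier_vec c" unfolding U2s_def d S using A by auto
  have e1: "A * 1\<^sub>m c = 1\<^sub>m r * A" using A by simp
  have e2: "B * 1\<^sub>m c = 1\<^sub>m r * B" using B by simp
  show ?thesis unfolding redp_def d U S
    using B A bm_one[of c] bm_one[of r] e1 e2
    by (intro conjI exI[of _ "1\<^sub>m c"] exI[of _ "1\<^sub>m r"]) auto
qed

lemma redp_IJ: assumes k: "1 \<le> k"
  shows "redp (1\<^sub>m k :: 'a::field mat) (jordan0 k) (1\<^sub>m (k - 1)) (jordan0 (k - 1)) (k - 1) (k - 1) (k - 1 - 1)"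
proof -
  have e1: "(1\<^sub>m k :: 'a mat) * Emat k = Emat k * 1\<^sub>m (k - 1)" using Emat_carrier[of k] by simp
  show ?thesis unfolding redp_def U2s_IJ V2s_jordan0
    using bm_Emat[of k] bm_Emat[of "k - 1"] e1 JE[of k] jordan0_carrier[of k] jordan0_carrier[of "k - 1"]
    by (intro conjI exI[of _ "Emat k"] exI[of _ "Emat (k - 1)"]) auto
qed

lemma redp_LRT: assumes k: "1 \<le> k"
  shows "redp (transpose_mat (Lmat k) :: 'a::field mat) (Emat k) (transpose_mat (Lmat (k - 1))) (Emat (k - 1))
     (k - 1 - 1) (k - 1) (k - 1 - 1)"
proof -
  show ?thesis unfolding redp_def U2s_LRT[OF k] V2s_Emat
    using bm_Emat[of k] bm_Emat[of "k - 1"] LE[of k] Emat_carrier[of k] Emat_carrier[of "k - 1"]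
      LTmat_carrier[of "k - 1"]
    by (intro conjI exI[of _ "Emat (k - 1)"] exI[of _ "Emat k"]) auto
qed




lemma dsum_empty: assumes "dim_row Z = 0" "dim_col Z = 0" shows "dsum_mat M Z = M"
  by (rule eq_matI) (use assms in \<open>auto simp: dsum_mat_def\<close>)

lemma dsum_pair_empty: assumes "dim_row (fst Z) = 0" "dim_col (fst Z) = 0" "dim_row (snd Z) = 0" "dim_col (snd Z) = 0"
  shows "dsum_pair X Z = X"
  unfolding dsum_pair_def using dsum_empty[OF assms(1,2)] dsum_empty[OF assms(3,4)] by simp

abbreviation fstep :: "'a::field mat \<times> 'a mat \<Rightarrow> summand \<Rightarrow> 'a mat \<times> 'a mat" where
  "fstep \<equiv> (\<lambda>P b. dsum_pair P (summand_pair b))"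

lemma summand_red: assumes b: "1 \<le> summand_index b"
  shows "\<exists>A2 B2 d e f. redp (fst (summand_pair b :: 'a::field mat \<times> 'a mat)) (snd (summand_pair b :: 'a mat \<times> 'a mat)) A2 B2 d e f \<and>
    (\<forall>X. foldl fstep X (reduce_summand b) = dsum_pair X (A2, B2)) \<and>
    (int (dim_row (fst (summand_pair b :: 'a mat \<times> 'a mat))) - int e) - (int (dim_col (fst (summand_pair b :: 'a mat \<times> 'a mat))) - int d)
      = (if b = LRT 1 then 1 else 0) \<and>
    (int (dim_col (fst (summand_pair b :: 'a mat \<times> 'a mat))) - int d) - (int e - int f) = (if b = IJ 1 then 1 else 0)"
proof (cases b)
  case (IJ k)
  hence k: "1 \<le> k" using b by simp
  have R: "redp (1\<^sub>m k :: 'a mat) (jordan0 k) (1\<^sub>m (k - 1)) (jordan0 (k - 1)) (k - 1) (k - 1) (k - 1 - 1)"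
    by (rule redp_IJ[OF k])
  have F: "foldl fstep X (reduce_summand b) = dsum_pair X (1\<^sub>m (k - 1), jordan0 (k - 1))" for X :: "'a mat \<times> 'a mat"
  proof (cases "k = 1")
    case True
    thus ?thesis using IJ by (simp add: dsum_pair_empty)
  next
    case False
    thus ?thesis using IJ k by simp
  qed
  show ?thesis using R F k IJ
    by (intro exI[of _ "1\<^sub>m (k - 1)"] exI[of _ "jordan0 (k - 1)"] exI[of _ "k - 1"] exI[of _ "k - 1"] exI[of _ "k - 1 - 1"]) auto
next
  case (JI k)
  have R: "redp (jordan0 k :: 'a mat) (1\<^sub>m k) (jordan0 k) (1\<^sub>m k) k k k"
    by (rule redp_surj[OF jordan0_carrier one_carrier_mat V2s_one])
  show ?thesis using R JI
    by (intro exI[of _ "jordan0 k"] exI[of _ "1\<^sub>m k"] exI[of _ k] exI[of _ k] exI[of _ k]) auto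
next
  case (LR k)
  have R: "redp (Lmat k :: 'a mat) (Rmat k) (Lmat k) (Rmat k) k (k - 1) (k - 1)"
    by (rule redp_surj[OF Lmat_carrier Rmat_carrier V2s_Rmat])
  show ?thesis using R LR
    by (intro exI[of _ "Lmat k"] exI[of _ "Rmat k"] exI[of _ k] exI[of _ "k - 1"] exI[of _ "k - 1"]) auto
next
  case (LRT k)
  hence k: "1 \<le> k" using b by simp
  have R: "redp (transpose_mat (Lmat k) :: 'a mat) (Emat k) (transpose_mat (Lmat (k - 1))) (Emat (k - 1))
     (k - 1 - 1) (k - 1) (k - 1 - 1)" by (rule redp_LRT[OF k])
  have F: "foldl fstep X (reduce_summand b) = dsum_pair X (transpose_mat (Lmat (k - 1)), Emat (k - 1))" for X :: "'a mat \<times> 'a mat"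
  proof (cases "k = 1")
    case True
    thus ?thesis using LRT by (simp add: dsum_pair_empty)
  next
    case False
    thus ?thesis using LRT k by simp
  qed
  show ?thesis using R F k LRT
    by (intro exI[of _ "transpose_mat (Lmat (k - 1))"] exI[of _ "Emat (k - 1)"] exI[of _ "k - 1 - 1"] exI[of _ "k - 1"] exI[of _ "k - 1 - 1"]) auto
qed


lemma decomp_snoc: "decomp_pair r D (bs @ [b]) = dsum_pair (decomp_pair r D bs) (summand_pair b)"
  unfolding decomp_pair_def by simp

lemma decomp_append: "decomp_pair r D (xs @ ys) = foldl fstep (decomp_pair r D xs) ys"
  unfolding decomp_pair_def by simp

lemma reduce_snoc: "reduce_summands (bs @ [b]) = reduce_summands bs @ reduce_summand b"
  unfolding reduce_summands_def by simp

lemma decomp_red: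
  fixes D :: "'a::field mat"
  assumes D: "D \<in> carrier_mat r r" "invertible_mat D"
  shows "(\<forall>b \<in> set bs. 1 \<le> summand_index b) \<Longrightarrow> \<exists>d e f.
    redp (fst (decomp_pair r D bs)) (snd (decomp_pair r D bs))
         (fst (decomp_pair r D (reduce_summands bs))) (snd (decomp_pair r D (reduce_summands bs))) d e f \<and>
    int (count_list bs (LRT 1)) = (int (dim_row (fst (decomp_pair r D bs))) - int e) - (int (dim_col (fst (decomp_pair r D bs))) - int d) \<and>
    int (count_list bs (IJ 1)) = (int (dim_col (fst (decomp_pair r D bs))) - int d) - (int e - int f)"
proof (induction bs rule: rev_induct)
  case Nil
  have R: "redp (1\<^sub>m r) D (1\<^sub>m r) D r r r" by (rule redp_surj[OF one_carrier_mat D(1) V2s_inv[OF D]])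
  show ?case using R by (intro exI[of _ r]) (simp add: decomp_pair_def reduce_summands_def)
next
  case (snoc b bs)
  have hb: "1 \<le> summand_index b" using snoc.prems by simp
  obtain d e f where IH: "redp (fst (decomp_pair r D bs)) (snd (decomp_pair r D bs))
         (fst (decomp_pair r D (reduce_summands bs))) (snd (decomp_pair r D (reduce_summands bs))) d e f"
    "int (count_list bs (LRT 1)) = (int (dim_row (fst (decomp_pair r D bs))) - int e) - (int (dim_col (fst (decomp_pair r D bs))) - int d)"
    "int (count_list bs (IJ 1)) = (int (dim_col (fst (decomp_pair r D bs))) - int d) - (int e - int f)"
    using snoc.IH snoc.prems by auto
  obtain A2 B2 d' e' f' where S: "redp (fst (summand_pair b :: 'a mat \<times> 'a mat)) (snd (summand_pair b :: 'a mat \<times> 'a mat)) A2 B2 d' e' f'"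
    "\<forall>X. foldl fstep X (reduce_summand b) = dsum_pair X (A2, B2)"
    "(int (dim_row (fst (summand_pair b :: 'a mat \<times> 'a mat))) - int e') - (int (dim_col (fst (summand_pair b :: 'a mat \<times> 'a mat))) - int d')
      = (if b = LRT 1 then 1 else 0)"
    "(int (dim_col (fst (summand_pair b :: 'a mat \<times> 'a mat))) - int d') - (int e' - int f') = (if b = IJ 1 then 1 else 0)"
    using summand_red[OF hb] by blast
  have R: "redp (fst (decomp_pair r D (bs @ [b]))) (snd (decomp_pair r D (bs @ [b])))
         (fst (decomp_pair r D (reduce_summands (bs @ [b])))) (snd (decomp_pair r D (reduce_summands (bs @ [b])))) (d + d') (e + e') (f + f')"
  proof -
    have eqF: "decomp_pair r D (reduce_summands (bs @ [b])) = dsum_pair (decomp_pair r D (reduce_summands bs)) (A2, B2)"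
      unfolding reduce_snoc decomp_append by (rule S(2)[rule_format])
    show ?thesis unfolding decomp_snoc eqF dsum_pair_def fst_conv snd_conv
      by (rule redp_dsum[OF IH(1) S(1)])
  qed
  have dr: "dim_row (fst (decomp_pair r D (bs @ [b]))) = dim_row (fst (decomp_pair r D bs)) + dim_row (fst (summand_pair b :: 'a mat \<times> 'a mat))"
    "dim_col (fst (decomp_pair r D (bs @ [b]))) = dim_col (fst (decomp_pair r D bs)) + dim_col (fst (summand_pair b :: 'a mat \<times> 'a mat))"
    unfolding decomp_snoc dsum_pair_def by simp_all
  have c1: "int (count_list (bs @ [b]) (LRT 1)) = int (count_list bs (LRT 1)) + (if b = LRT 1 then 1 else 0)" by simp
  have c2: "int (count_list (bs @ [b]) (IJ 1)) = int (count_list bs (IJ 1)) + (if b = IJ 1 then 1 else 0)" by simp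
  show ?case
  proof (rule exI[of _ "d + d'"], rule exI[of _ "e + e'"], rule exI[of _ "f + f'"], intro conjI)
    show "redp (fst (decomp_pair r D (bs @ [b]))) (snd (decomp_pair r D (bs @ [b])))
         (fst (decomp_pair r D (reduce_summands (bs @ [b])))) (snd (decomp_pair r D (reduce_summands (bs @ [b])))) (d + d') (e + e') (f + f')"
      by (rule R)
    show "int (count_list (bs @ [b]) (LRT 1)) = int (dim_row (fst (decomp_pair r D (bs @ [b])))) - int (e + e') -
        (int (dim_col (fst (decomp_pair r D (bs @ [b])))) - int (d + d'))"
      using IH(2) S(3) unfolding c1 dr of_nat_add by linarith
    show "int (count_list (bs @ [b]) (IJ 1)) = int (dim_col (fst (decomp_pair r D (bs @ [b])))) - int (d + d') -
        (int (e + e') - int (f + f'))"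
      using IH(3) S(4) unfolding c2 dr of_nat_add by linarith
  qed
qed




lemma inv_mult: fixes S T :: "'a::field mat"
  assumes S: "S \<in> carrier_mat n n" "invertible_mat S" and T: "T \<in> carrier_mat n n" "invertible_mat T"
  shows "invertible_mat (S * T)"
proof -
  obtain Si where Si: "Si \<in> carrier_mat n n" "S * Si = 1\<^sub>m n" "Si * S = 1\<^sub>m n" using inv_obtain[OF S(2) S(1)] by blast
  obtain Ti where Ti: "Ti \<in> carrier_mat n n" "T * Ti = 1\<^sub>m n" "Ti * T = 1\<^sub>m n" using inv_obtain[OF T(2) T(1)] by blast
  have "(S * T) * (Ti * Si) = S * (T * (Ti * Si))" using assoc_mult_mat[OF S(1) T(1) mult_carrier_mat[OF Ti(1) Si(1)]] .
  also have "\<dots> = S * ((T * Ti) * Si)" using assoc_mult_mat[OF T(1) Ti(1) Si(1)] by simp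
  also have "\<dots> = 1\<^sub>m n" using Ti(2) Si(1) S(1) Si(2) by simp
  finally have e1: "(S * T) * (Ti * Si) = 1\<^sub>m n" .
  have "(Ti * Si) * (S * T) = Ti * (Si * (S * T))" using assoc_mult_mat[OF Ti(1) Si(1) mult_carrier_mat[OF S(1) T(1)]] .
  also have "\<dots> = Ti * ((Si * S) * T)" using assoc_mult_mat[OF Si(1) S(1) T(1)] by simp
  also have "\<dots> = 1\<^sub>m n" using Si(3) T(1) Ti(3) by simp
  finally have e2: "(Ti * Si) * (S * T) = 1\<^sub>m n" .
  show ?thesis using invI(1)[OF mult_carrier_mat[OF S(1) T(1)] mult_carrier_mat[OF Ti(1) Si(1)] e1 e2] .
qed

lemma reduce_index: "\<forall>b \<in> set bs. 1 \<le> summand_index b \<Longrightarrow> \<forall>b \<in> set (reduce_summands bs). 1 \<le> summand_index b"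
proof
  fix b' assume H: "\<forall>b \<in> set bs. 1 \<le> summand_index b" and b': "b' \<in> set (reduce_summands bs)"
  then obtain b where b: "b \<in> set bs" "b' \<in> set (reduce_summand b)" unfolding reduce_summands_def by auto
  have "1 \<le> summand_index b" using H b(1) by blast
  thus "1 \<le> summand_index b'" using b(2) by (cases b) (auto split: if_splits)
qed

theorem lemma1:
  fixes MA MB :: "'a::field mat" and n m :: nat
    and P1 Q1 A1 B1 P2 Q2 Q3 A2 B2 :: "'a mat"
    and r :: nat and D :: "'a mat" and bs :: "summand list"
  defines "V2 \<equiv> (\<lambda>u. MB *\<^sub>v u) ` carrier_vec n"
  defines "U2 \<equiv> {u \<in> carrier_vec n. MA *\<^sub>v u \<in> V2}"
  defines "V3 \<equiv> (\<lambda>u. MB *\<^sub>v u) ` U2"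
  assumes MA: "MA \<in> carrier_mat m n" and MB: "MB \<in> carrier_mat m n"
  assumes P1: "P1 \<in> carrier_mat n n" "invertible_mat P1"
    and Q1: "Q1 \<in> carrier_mat m m" "invertible_mat Q1"
    and A1: "A1 \<in> carrier_mat m n" "MA * P1 = Q1 * A1"
    and B1: "B1 \<in> carrier_mat m n" "MB * P1 = Q1 * B1"
  assumes P2: "basis_matrix n U2 P2"
    and Q2: "basis_matrix m V2 Q2"
    and A2: "A2 \<in> carrier_mat (dim_col Q2) (dim_col P2)" "MA * P2 = Q2 * A2"
    and B2: "B2 \<in> carrier_mat (dim_col Q2) (dim_col P2)" "MB * P2 = Q2 * B2"
  assumes Q3: "basis_matrix m V3 Q3"
  assumes dec: "regularizing_decomp (A1, B1) r D bs"
  shows "regularizing_decomp (A2, B2) r D (reduce_summands bs)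
    \<and> int (count_list bs (LRT 1)) = (int m - int (dim_col Q2)) - (int n - int (dim_col P2))
    \<and> int (count_list bs (IJ 1)) = (int n - int (dim_col P2)) - (int (dim_col Q2) - int (dim_col Q3))"
proof -
  define DA where "DA = fst (decomp_pair r D bs)"
  define DB where "DB = snd (decomp_pair r D bs)"
  define DA2 where "DA2 = fst (decomp_pair r D (reduce_summands bs))"
  define DB2 where "DB2 = snd (decomp_pair r D (reduce_summands bs))"
  have Dc: "D \<in> carrier_mat r r" "invertible_mat D" and idx: "\<forall>b \<in> set bs. 1 \<le> summand_index b"
    and pe: "pair_equiv (A1, B1) (DA, DB)"
    using dec unfolding regularizing_decomp_def DA_def DB_def by auto
  have dA1: "dim_row A1 = m" "dim_col A1 = n" using A1(1) by auto
  obtain S0 R0 where DAc: "DA \<in> carrier_mat m n" "DB \<in> carrier_mat m n"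
    and S0: "S0 \<in> carrier_mat m m" "invertible_mat S0" and R0: "R0 \<in> carrier_mat n n" "invertible_mat R0"
    and e0: "S0 * A1 = DA * R0" "S0 * B1 = DB * R0"
    using pe unfolding pair_equiv_def Let_def fst_conv snd_conv dA1 by blast
  obtain d e f where RD: "redp DA DB DA2 DB2 d e f"
    and cnt1: "int (count_list bs (LRT 1)) = (int (dim_row DA) - int e) - (int (dim_col DA) - int d)"
    and cnt2: "int (count_list bs (IJ 1)) = (int (dim_col DA) - int d) - (int e - int f)"
    using decomp_red[OF Dc idx] unfolding DA_def DB_def DA2_def DB2_def by blast
  have dDA: "dim_row DA = m" "dim_col DA = n" using DAc by auto
  obtain P' Q' Q3' where P': "basis_matrix n (U2s DA DB) P'" and Q': "basis_matrix m (V2s DB) Q'"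
    and Q3': "basis_matrix m (V3s DA DB) Q3'" and dd: "dim_col P' = d" "dim_col Q' = e" "dim_col Q3' = f"
    and eqD: "DA * P' = Q' * DA2" "DB * P' = Q' * DB2"
    using redp_V3[OF RD] unfolding dDA by blast
  have RDc: "DA2 \<in> carrier_mat e d" "DB2 \<in> carrier_mat e d" using RD unfolding redp_def by auto
  obtain Q1i where Q1i: "Q1i \<in> carrier_mat m m" "Q1 * Q1i = 1\<^sub>m m" "Q1i * Q1 = 1\<^sub>m m" using inv_obtain[OF Q1(2) Q1(1)] by blast
  obtain P1i where P1i: "P1i \<in> carrier_mat n n" "P1 * P1i = 1\<^sub>m n" "P1i * P1 = 1\<^sub>m n" using inv_obtain[OF P1(2) P1(1)] by blast
  have key: "(S0 * Q1i) * M = N * (R0 * P1i)"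
    if M: "M \<in> carrier_mat m n" and C: "C \<in> carrier_mat m n" and N: "N \<in> carrier_mat m n"
      and e1: "M * P1 = Q1 * C" and e2: "S0 * C = N * R0" for M C N
  proof -
    have "C = Q1i * (M * P1)"
      using e1 assoc_mult_mat[OF Q1i(1) Q1(1) C] Q1i(3) C by simp
    hence "N * R0 = S0 * (Q1i * (M * P1))" using e2 by simp
    also have "\<dots> = ((S0 * Q1i) * M) * P1"
      using assoc_mult_mat[OF S0(1) Q1i(1) mult_carrier_mat[OF M P1(1)]] assoc_mult_mat[OF mult_carrier_mat[OF S0(1) Q1i(1)] M P1(1)] by simp
    finally have "(N * R0) * P1i = (((S0 * Q1i) * M) * P1) * P1i" by simp
    also have "\<dots> = ((S0 * Q1i) * M) * (P1 * P1i)"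
      using assoc_mult_mat[OF mult_carrier_mat[OF mult_carrier_mat[OF S0(1) Q1i(1)] M] P1(1) P1i(1)] .
    also have "\<dots> = (S0 * Q1i) * M" using P1i(2) right_mult_one_mat[OF mult_carrier_mat[OF mult_carrier_mat[OF S0(1) Q1i(1)] M]] by simp
    finally show ?thesis using assoc_mult_mat[OF N R0(1) P1i(1)] by simp
  qed
  have Q1iinv: "invertible_mat Q1i" using invI(2)[OF Q1(1) Q1i(1) Q1i(2,3)] .
  have P1iinv: "invertible_mat P1i" using invI(2)[OF P1(1) P1i(1) P1i(2,3)] .
  have Sinv: "invertible_mat (S0 * Q1i)" by (rule inv_mult[OF S0 Q1i(1) Q1iinv])
  have Rinv: "invertible_mat (R0 * P1i)" by (rule inv_mult[OF R0 P1i(1) P1iinv])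
  have eA: "(S0 * Q1i) * MA = DA * (R0 * P1i)" by (rule key[OF MA A1(1) DAc(1) A1(2) e0(1)])
  have eB: "(S0 * Q1i) * MB = DB * (R0 * P1i)" by (rule key[OF MB B1(1) DAc(2) B1(2) e0(2)])
  have dMB: "dim_col MB = n" using MB by simp
  have V2e: "V2 = V2s MB" unfolding V2_def V2s_def dMB ..
  have U2e: "U2 = U2s MA MB" unfolding U2_def U2s_def dMB V2e ..
  have V3e: "V3 = V3s MA MB" unfolding V3_def V3s_def U2e ..
  have ER: "dim_col P' = dim_col P2 \<and> dim_col Q' = dim_col Q2 \<and> dim_col Q3' = dim_col Q3 \<and> pair_equiv (A2, B2) (DA2, DB2)"
    using equiv_reduce[OF MA MB DAc(1,2) mult_carrier_mat[OF S0(1) Q1i(1)] Sinv mult_carrier_mat[OF R0(1) P1i(1)] Rinv eA eB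
      P2[unfolded U2e] Q2[unfolded V2e] Q3[unfolded V3e] P' Q' Q3' A2(1) B2(1) A2(2) B2(2)] RDc dd eqD by auto
  have "regularizing_decomp (A2, B2) r D (reduce_summands bs)"
    unfolding regularizing_decomp_def using Dc reduce_index[OF idx] ER unfolding DA2_def DB2_def by simp
  moreover have "int (count_list bs (LRT 1)) = (int m - int (dim_col Q2)) - (int n - int (dim_col P2))"
    using cnt1 dDA ER dd by simp
  moreover have "int (count_list bs (IJ 1)) = (int n - int (dim_col P2)) - (int (dim_col Q2) - int (dim_col Q3))"
    using cnt2 dDA ER dd by simp
  ultimately show ?thesis by blast
qed


end
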